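(* Let $S$ be a finite set, $d\ge 1$, and let $X\subset S^{\mathbb Z^d}$ be an irreducible $\mathbb Z^d$-topological Markov shift such that the tail relation $\mathfrak T(X)$ is topologically transitive on $X$. Let $\mathbb G$ be a countable Abelian group and $G:S\to\mathbb G$. If $p$ is a Borel probability measure on $X$ which is global, $\mathfrak T(X)$-nonsingular, and $\mathfrak T(X)[\Psi_G]$-invariant and $\mathfrak T(X)[\Psi_G]$-ergodic, then there is a group homomorphism $H:\mathbb G\to\mathbb R$ such that $p$ is $H\circ G$-conformal, i.e. for every Borel bijection $\Phi:B\to C$ between Borel sets $B,C\subset X$ with $(x,\Phi(x))\in\mathfrak T(X)$ for all $x\in B$, one has $\frac{d\,p\circ\Phi}{dp}(x)=e^{H(\Psi_G(x,\Phi(x)))}$ for $p$-a.e. $x\in B$.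
   Context: Notation: for $n\in\mathbb Z^d$, $\|n\|=\max_k|n_k|$ and $B(n,r)=\{k\in\mathbb Z^d:\|k-n\|\le r\}$. For $x\in S^{\mathbb Z^d}$ and $\Lambda\subset\mathbb Z^d$, $x_\Lambda\in S^\Lambda$ is the restriction. The shift is $(T_kx)_n=x_{n+k}$. A $\mathbb Z^d$-topological Markov shift (TMS) is a set of the form $X=\{x\in S^{\mathbb Z^d}:(x_k,(x_{k+j})_{j\in\partial B(0,1)})\in A\ \forall k\in\mathbb Z^d\}$ for some $A\subset S\times S^{\partial B(0,1)}$, where $\partial B(0,1)=B(0,1)\setminus\{0\}$. $X$ is irreducible if for all nonempty open $U,V\subset X$ there is $k\in\mathbb Z^d$ with $U\cap T_kV\ne\emptyset$. The tail relation is $\mathfrak T(X)=\{(x,y)\in X\times X:\exists F\subset\mathbb Z^d\text{ finite},\ x_{F^c}=y_{F^c}\}$. For $G:S\to\mathbb G$ and $(x,y)\in\mathfrak T(X)$, $\Psi_G(x,y)=\sum_{j\in\mathbb Z^d}(G(y_j)-G(x_j))$ (a finite sum), and $\mathfrak T(X)[\Psi_G]=\{(x,y)\in\mathfrak T(X):\Psi_G(x,y)=0\}$. For a countable Borel equivalence relation $\mathcal R$ on $X$: $\mathcal R$ is topologically transitive if $(U\times V)\cap\mathcal R\neq\emptyset$ for all nonempty open $U,V\subset X$; $p$ is $\mathcal R$-nonsingular if $p(A)=0$ implies $p(\mathcal R(A))=0$, where $\mathcal R(A)=\{y:\exists x\in A,(x,y)\in\mathcal R\}$; $p$ is $\mathcal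 R$-invariant if it is nonsingular and every Borel bijection $\Phi:B\to C$ with $(x,\Phi(x))\in\mathcal R$ preserves $p$ (i.e. $p\circ\Phi=p$ on $B$); $p$ is $\mathcal R$-ergodic if every Borel set $A$ with ($x\in A$, $(x,y)\in\mathcal R$ $\Rightarrow y\in A$) has $p(A)\in\{0,1\}$. $p$ is global if every nonempty open subset of $X$ has positive $p$-measure. *)

theory Defs
  imports "HOL-Analysis.Analysis" "HOL-Probability.Probability"
begin

(* Lattice sites of Z^d are functions 'd \<Rightarrow> int, 'd an arbitrary finite (nonempty) index type
   with CARD('d) = d \<ge> 1.  The alphabet S is a finite type 'a. *)

type_synonym 'd site = "'d \<Rightarrow> int"
type_synonym ('d,'a) config = "'d site \<Rightarrow> 'a"

definition site_add :: "'d site \<Rightarrow> 'd site \<Rightarrow> 'd site" where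
  "site_add n k = (\<lambda>i. n i + k i)"

definition nbhd :: "'d::finite site set" where
  "nbhd = {j. j \<noteq> (\<lambda>_. 0) \<and> (\<forall>i. \<bar>j i\<bar> \<le> 1)}"

definition shift :: "'d site \<Rightarrow> ('d,'a) config \<Rightarrow> ('d,'a) config" where
  "shift k x = (\<lambda>n. x (site_add n k))"

definition TMS :: "('a \<times> ('d::finite site \<Rightarrow> 'a)) set \<Rightarrow> ('d,'a) config set" where
  "TMS A = {x. \<forall>k. (x k, restrict (\<lambda>j. x (site_add k j)) nbhd) \<in> A}"

definition shift_top :: "('d,'a) config set \<Rightarrow> ('d,'a) config topology" where
  "shift_top X = subtopology (product_topology (\<lambda>_. discrete_topology UNIV) UNIV) X"

definition borel_X :: "('d,'a) config set \<Rightarrow> ('d,'a) config measure" where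
  "borel_X X = sigma X {U. openin (shift_top X) U}"

definition irreducible_TMS :: "('d,'a) config set \<Rightarrow> bool" where
  "irreducible_TMS X \<longleftrightarrow>
     (\<forall>U V. openin (shift_top X) U \<longrightarrow> openin (shift_top X) V \<longrightarrow> U \<noteq> {} \<longrightarrow> V \<noteq> {} \<longrightarrow>
        (\<exists>k. U \<inter> shift k ` V \<noteq> {}))"

definition tail_rel :: "('d,'a) config set \<Rightarrow> (('d,'a) config \<times> ('d,'a) config) set" where
  "tail_rel X = {(x,y). x \<in> X \<and> y \<in> X \<and> finite {n. x n \<noteq> y n}}"

definition Psi :: "('a \<Rightarrow> 'g::ab_group_add) \<Rightarrow> ('d,'a) config \<Rightarrow> ('d,'a) config \<Rightarrow> 'g" where
  "Psi G x y = (\<Sum>j\<in>{n. x n \<noteq> y n}. G (y j) - G (x j))"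

definition tail_rel_Psi :: "('d,'a) config set \<Rightarrow> ('a \<Rightarrow> 'g::ab_group_add)
    \<Rightarrow> (('d,'a) config \<times> ('d,'a) config) set" where
  "tail_rel_Psi X G = {(x,y) \<in> tail_rel X. Psi G x y = 0}"

definition top_transitive :: "('d,'a) config set \<Rightarrow> (('d,'a) config \<times> ('d,'a) config) set \<Rightarrow> bool" where
  "top_transitive X R \<longleftrightarrow>
     (\<forall>U V. openin (shift_top X) U \<longrightarrow> openin (shift_top X) V \<longrightarrow> U \<noteq> {} \<longrightarrow> V \<noteq> {} \<longrightarrow>
        (U \<times> V) \<inter> R \<noteq> {})"

definition borel_bij :: "'x measure \<Rightarrow> 'x set \<Rightarrow> 'x set \<Rightarrow> ('x \<Rightarrow> 'x) \<Rightarrow> bool" where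
  "borel_bij M B C \<Phi> \<longleftrightarrow> B \<in> sets M \<and> C \<in> sets M \<and> bij_betw \<Phi> B C \<and>
     (\<forall>A\<in>sets M. \<Phi> -` A \<inter> B \<in> sets M) \<and>
     (\<forall>A\<in>sets M. A \<subseteq> B \<longrightarrow> \<Phi> ` A \<in> sets M)"

definition partial_iso :: "'x measure \<Rightarrow> ('x \<times> 'x) set \<Rightarrow> 'x set \<Rightarrow> 'x set \<Rightarrow> ('x \<Rightarrow> 'x) \<Rightarrow> bool" where
  "partial_iso M R B C \<Phi> \<longleftrightarrow> borel_bij M B C \<Phi> \<and> (\<forall>x\<in>B. (x, \<Phi> x) \<in> R)"

definition global_measure :: "('d,'a) config set \<Rightarrow> ('d,'a) config measure \<Rightarrow> bool" where
  "global_measure X p \<longleftrightarrow> (\<forall>U. openin (shift_top X) U \<longrightarrow> U \<noteq> {} \<longrightarrow> emeasure p U > 0)"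

definition nonsingular :: "'x measure \<Rightarrow> ('x \<times> 'x) set \<Rightarrow> bool" where
  "nonsingular M R \<longleftrightarrow> (\<forall>A \<in> null_sets M. R `` A \<in> null_sets M)"

definition invariant :: "'x measure \<Rightarrow> ('x \<times> 'x) set \<Rightarrow> bool" where
  "invariant M R \<longleftrightarrow> nonsingular M R \<and>
     (\<forall>B C \<Phi>. partial_iso M R B C \<Phi> \<longrightarrow>
        (\<forall>A\<in>sets M. A \<subseteq> B \<longrightarrow> emeasure M (\<Phi> ` A) = emeasure M A))"

definition ergodic :: "'x measure \<Rightarrow> ('x \<times> 'x) set \<Rightarrow> bool" where
  "ergodic M R \<longleftrightarrow> (\<forall>A\<in>sets M. (\<forall>x y. x \<in> A \<longrightarrow> (x,y) \<in> R \<longrightarrow> y \<in> A) \<longrightarrow>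
      emeasure M A = 0 \<or> emeasure M A = 1)"

(* p is f-conformal for the cocycle f : for each partial isomorphism \<Phi> : B \<rightarrow> C in the tail relation,
   d(p\<circ>\<Phi>)/dp = exp (f x (\<Phi> x)) p-a.e. on B, i.e. p(\<Phi> A) = \<integral>_A exp(f x (\<Phi> x)) dp for Borel A \<subseteq> B *)
definition conformal :: "'x measure \<Rightarrow> ('x \<times> 'x) set \<Rightarrow> ('x \<Rightarrow> 'x \<Rightarrow> real) \<Rightarrow> bool" where
  "conformal M R f \<longleftrightarrow>
     (\<forall>B C \<Phi>. partial_iso M R B C \<Phi> \<longrightarrow>
        (\<forall>A\<in>sets M. A \<subseteq> B \<longrightarrow>
           emeasure M (\<Phi> ` A) = (\<integral>\<^sup>+ x. ennreal (exp (f x (\<Phi> x))) * indicator A x \<partial>M)))"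

end

theory Submission
  imports Defs
begin

section \<open>Psi and tail relation\<close>

definition dset :: "('d,'a) config \<Rightarrow> ('d,'a) config \<Rightarrow> 'd site set" where
  "dset x y = {n. x n \<noteq> y n}"

lemma Psi_superset:
  assumes "finite W" "{n. x n \<noteq> y n} \<subseteq> W"
  shows "Psi G x y = (\<Sum>j\<in>W. G (y j) - G (x j))"
  unfolding Psi_def
  by (rule sum.mono_neutral_left) (use assms in auto)

lemma Psi_trans:
  assumes "finite {n. x n \<noteq> y n}" "finite {n. y n \<noteq> z n}"
  shows "Psi G x z = Psi G x y + Psi G y z"
proof -
  let ?W = "{n. x n \<noteq> y n} \<union> {n. y n \<noteq> z n}"
  have f: "finite ?W" using assms by auto
  have "Psi G x z = (\<Sum>j\<in>?W. G (z j) - G (x j))"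
    by (rule Psi_superset[OF f]) auto
  also have "\<dots> = (\<Sum>j\<in>?W. (G (y j) - G (x j)) + (G (z j) - G (y j)))"
    by (rule sum.cong) auto
  also have "\<dots> = (\<Sum>j\<in>?W. G (y j) - G (x j)) + (\<Sum>j\<in>?W. G (z j) - G (y j))"
    by (rule sum.distrib)
  also have "\<dots> = Psi G x y + Psi G y z"
    using Psi_superset[OF f, of x y G] Psi_superset[OF f, of y z G] by auto
  finally show ?thesis .
qed

lemma Psi_self[simp]: "Psi G x x = 0"
  unfolding Psi_def by simp

lemma Psi_sym:
  assumes "finite {n. x n \<noteq> y n}"
  shows "Psi G y x = - Psi G x y"
proof -
  have "finite {n. y n \<noteq> x n}" using assms by (metis (mono_tags) Collect_cong)
  then have "Psi G x x = Psi G x y + Psi G y x" using assms Psi_trans by blast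
  then have "Psi G y x + Psi G x y = 0" by (simp add: add.commute)
  then show ?thesis by (rule add_eq_0_iff2[THEN iffD1])
qed

lemma tail_rel_refl: "x \<in> X \<Longrightarrow> (x,x) \<in> tail_rel X"
  unfolding tail_rel_def by simp

lemma tail_rel_sym: "(x,y) \<in> tail_rel X \<Longrightarrow> (y,x) \<in> tail_rel X"
  unfolding tail_rel_def by (auto simp: eq_commute)

lemma tail_rel_trans: "(x,y) \<in> tail_rel X \<Longrightarrow> (y,z) \<in> tail_rel X \<Longrightarrow> (x,z) \<in> tail_rel X"
  unfolding tail_rel_def
  by (auto intro: finite_subset[of _ "{n. x n \<noteq> y n} \<union> {n. y n \<noteq> z n}"])

lemma tail_rel_finite: "(x,y) \<in> tail_rel X \<Longrightarrow> finite {n. x n \<noteq> y n}"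
  unfolding tail_rel_def by simp

lemma tail_rel_in: "(x,y) \<in> tail_rel X \<Longrightarrow> x \<in> X \<and> y \<in> X"
  unfolding tail_rel_def by simp

lemma Psi_trans_R: "(x,y) \<in> tail_rel X \<Longrightarrow> (y,z) \<in> tail_rel X \<Longrightarrow> Psi G x z = Psi G x y + Psi G y z"
  by (rule Psi_trans) (auto dest: tail_rel_finite)

lemma Psi_sym_R: "(x,y) \<in> tail_rel X \<Longrightarrow> Psi G y x = - Psi G x y"
  by (rule Psi_sym) (auto dest: tail_rel_finite)

lemma R0_iff: "(x,y) \<in> tail_rel_Psi X G \<longleftrightarrow> (x,y) \<in> tail_rel X \<and> Psi G x y = 0"
  unfolding tail_rel_Psi_def by auto

section \<open>Borel bijections\<close>

lemma bb_sets: "borel_bij M B C f \<Longrightarrow> B \<in> sets M \<and> C \<in> sets M"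
  unfolding borel_bij_def by auto

lemma bb_bij: "borel_bij M B C f \<Longrightarrow> bij_betw f B C"
  unfolding borel_bij_def by auto

lemma bb_pre: "borel_bij M B C f \<Longrightarrow> A \<in> sets M \<Longrightarrow> f -` A \<inter> B \<in> sets M"
  unfolding borel_bij_def by auto

lemma bb_img: "borel_bij M B C f \<Longrightarrow> A \<in> sets M \<Longrightarrow> A \<subseteq> B \<Longrightarrow> f ` A \<in> sets M"
  unfolding borel_bij_def by auto

lemma bb_restrict:
  assumes "borel_bij M B C f" "B' \<in> sets M" "B' \<subseteq> B"
  shows "borel_bij M B' (f ` B') f"
proof -
  have "f -` A \<inter> B' \<in> sets M" if "A \<in> sets M" for A
  proof -
    have "f -` A \<inter> B' = (f -` A \<inter> B) \<inter> B'" using assms(3) by auto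
    then show ?thesis using bb_pre[OF assms(1) that] assms(2) by auto
  qed
  moreover have "bij_betw f B' (f ` B')"
    using bb_bij[OF assms(1)] assms(3) by (meson bij_betw_def inj_on_subset)
  moreover have "\<forall>A\<in>sets M. A \<subseteq> B' \<longrightarrow> f ` A \<in> sets M"
    using bb_img[OF assms(1)] assms(3) by blast
  moreover have "f ` B' \<in> sets M" using bb_img[OF assms(1) assms(2,3)] .
  ultimately show ?thesis
    using assms(2) unfolding borel_bij_def by blast
qed

lemma bb_inv:
  assumes "borel_bij M B C f"
  shows "borel_bij M C B (the_inv_into B f)"
proof -
  have bij: "bij_betw f B C" using bb_bij[OF assms] .
  have B: "B \<in> sets M" and C: "C \<in> sets M" using bb_sets[OF assms] by auto
  have "the_inv_into B f -` A \<inter> C \<in> sets M" if "A \<in> sets M" for A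
  proof -
    have "the_inv_into B f -` A \<inter> C = f ` (A \<inter> B)"
    proof
      show "the_inv_into B f -` A \<inter> C \<subseteq> f ` (A \<inter> B)"
      proof
        fix y assume y: "y \<in> the_inv_into B f -` A \<inter> C"
        have i: "inj_on f B" "f ` B = C" using bij by (auto simp: bij_betw_def)
        have yC: "y \<in> f ` B" using y i by auto
        have "f (the_inv_into B f y) = y" using f_the_inv_into_f[OF i(1) yC] .
        moreover have "the_inv_into B f y \<in> B" using y i the_inv_into_into[of f B y B] by auto
        ultimately show "y \<in> f ` (A \<inter> B)" using y by (metis IntI image_eqI vimageE IntD1)
      qed
      show "f ` (A \<inter> B) \<subseteq> the_inv_into B f -` A \<inter> C"
        using bij by (auto simp: bij_betw_def the_inv_into_f_f)
    qed
    then show ?thesis using bb_img[OF assms, of "A \<inter> B"] that B by auto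
  qed
  moreover have "the_inv_into B f ` A \<in> sets M" if "A \<in> sets M" "A \<subseteq> C" for A
  proof -
    have i: "inj_on f B" "f ` B = C" using bij by (auto simp: bij_betw_def)
    have "the_inv_into B f ` A = f -` A \<inter> B"
    proof
      show "the_inv_into B f ` A \<subseteq> f -` A \<inter> B"
      proof
        fix x assume "x \<in> the_inv_into B f ` A"
        then obtain y where y: "y \<in> A" "x = the_inv_into B f y" by auto
        then have "y \<in> C" using that by auto
        then show "x \<in> f -` A \<inter> B" using y i f_the_inv_into_f[of f B y] the_inv_into_into[of f B y B] by auto
      qed
      show "f -` A \<inter> B \<subseteq> the_inv_into B f ` A"
      proof
        fix x assume x: "x \<in> f -` A \<inter> B"
        then have xB: "x \<in> B" and fx: "f x \<in> A" by auto
        have "the_inv_into B f (f x) = x" using the_inv_into_f_f[OF i(1) xB] .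
        then show "x \<in> the_inv_into B f ` A" using fx by (metis image_eqI)
      qed
    qed
    then show ?thesis using bb_pre[OF assms that(1)] by auto
  qed
  moreover have "bij_betw (the_inv_into B f) C B" using bij bij_betw_the_inv_into by blast
  ultimately show ?thesis using B C unfolding borel_bij_def by blast
qed

lemma bb_comp:
  assumes "borel_bij M B C f" "borel_bij M C D g"
  shows "borel_bij M B D (g \<circ> f)"
proof -
  have bf: "bij_betw f B C" and bg: "bij_betw g C D" using assms bb_bij by auto
  have "(g \<circ> f) -` A \<inter> B \<in> sets M" if "A \<in> sets M" for A
  proof -
    have "(g \<circ> f) -` A \<inter> B = f -` (g -` A \<inter> C) \<inter> B"
      using bf by (auto simp: bij_betw_def)
    then show ?thesis using bb_pre[OF assms(1) bb_pre[OF assms(2) that]] by simp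
  qed
  moreover have "(g \<circ> f) ` A \<in> sets M" if "A \<in> sets M" "A \<subseteq> B" for A
  proof -
    have "f ` A \<in> sets M" "f ` A \<subseteq> C" using bb_img[OF assms(1) that] that(2) bf
      by (auto simp: bij_betw_def)
    then show ?thesis using bb_img[OF assms(2)] by (metis image_comp)
  qed
  moreover have "bij_betw (g \<circ> f) B D" using bf bg bij_betw_trans by blast
  ultimately show ?thesis using bb_sets[OF assms(1)] bb_sets[OF assms(2)] unfolding borel_bij_def by blast
qed

lemma bb_id: "B \<in> sets M \<Longrightarrow> borel_bij M B B (\<lambda>x. x)"
  unfolding borel_bij_def by (auto simp: bij_betw_def)

abbreviation PT :: "('d,'a) config topology" where
  "PT \<equiv> product_topology (\<lambda>_. discrete_topology UNIV) UNIV"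

lemma topspace_PT[simp]: "topspace PT = UNIV"
  by (simp add: PiE_UNIV_domain)

lemma open_pre_proj: "openin PT {y. y n = a}"
proof -
  have "openin PT {y \<in> topspace PT. y n \<in> {a}}"
    by (rule openin_continuous_map_preimage[OF continuous_map_product_projection]) auto
  then show ?thesis by simp
qed

lemma cyl_open:
  assumes "finite W"
  shows "openin PT {y. \<forall>n\<in>W. y n = x n}"
  using assms
proof (induction W rule: finite_induct)
  case empty
  then show ?case using openin_topspace[of PT] by simp
next
  case (insert n W)
  have "{y. \<forall>m\<in>insert n W. y m = x m} = {y. y n = x n} \<inter> {y. \<forall>m\<in>W. y m = x m}" by auto
  then show ?case by (simp only:) (intro openin_Int open_pre_proj insert.IH)
qed

lemma shift_top_subset: "openin (shift_top X) U \<Longrightarrow> U \<subseteq> X"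
  unfolding shift_top_def using openin_subset by fastforce

lemma space_borel_X[simp]: "space (borel_X X) = X"
  unfolding borel_X_def by (rule space_measure_of) (auto dest: shift_top_subset)

lemma sets_borel_X: "sets (borel_X X) = sigma_sets X {U. openin (shift_top X) U}"
  unfolding borel_X_def by (rule sets_measure_of) (auto dest: shift_top_subset)

lemma open_in_borel_X: "openin (shift_top X) U \<Longrightarrow> U \<in> sets (borel_X X)"
  unfolding sets_borel_X by auto

lemma PT_open_in_borel_X: "openin PT U \<Longrightarrow> U \<inter> X \<in> sets (borel_X X)"
  by (rule open_in_borel_X) (auto simp: shift_top_def openin_subtopology)

lemma local_sets:
  assumes "finite W"
    and loc: "\<And>x x'. x \<in> X \<Longrightarrow> x' \<in> X \<Longrightarrow> (\<forall>n\<in>W. x n = x' n) \<Longrightarrow> P x \<Longrightarrow> P x'"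
  shows "{x\<in>X. P x} \<in> sets (borel_X X)"
proof -
  let ?U = "\<Union>{ {y. \<forall>n\<in>W. y n = x n} | x. x \<in> X \<and> P x}"
  have "openin PT ?U" using cyl_open[OF assms(1)] by auto
  moreover have "{x\<in>X. P x} = ?U \<inter> X"
  proof
    show "{x\<in>X. P x} \<subseteq> ?U \<inter> X" by blast
    show "?U \<inter> X \<subseteq> {x\<in>X. P x}"
    proof
      fix y assume "y \<in> ?U \<inter> X"
      then obtain x where x: "x \<in> X" "P x" "\<forall>n\<in>W. y n = x n" "y \<in> X" by blast
      have "\<forall>n\<in>W. x n = y n" using x(3) by simp
      then have "P y" using loc[OF x(1) x(4) _ x(2)] by blast
      then show "y \<in> {x\<in>X. P x}" using x(4) by blast
    qed
  qed
  ultimately show ?thesis using PT_open_in_borel_X[of ?U X] by simp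
qed

lemma cyl_sets: "{x\<in>X. x n = a} \<in> sets (borel_X X)"
  by (rule local_sets[of "{n}"]) auto

lemma cont_pre_sets:
  assumes cont: "continuous_map PT PT f"
    and D: "D \<in> sets (borel_X X)" and fD: "\<And>x. x \<in> D \<Longrightarrow> f x \<in> X"
    and A: "A \<in> sets (borel_X X)"
  shows "f -` A \<inter> D \<in> sets (borel_X X)"
proof -
  let ?N = "restrict_space (borel_X X) D"
  have DX: "D \<subseteq> X" using sets.sets_into_space[OF D] by simp
  have spN: "space ?N = D" using DX by (auto simp: space_restrict_space)
  have DD: "D \<inter> space (borel_X X) \<in> sets (borel_X X)" using D DX by (simp add: Int_absorb2)
  have meas0: "f \<in> measurable ?N (sigma X {U. openin (shift_top X) U})"
  proof (rule measurable_measure_of)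
    show "{U. openin (shift_top X) U} \<subseteq> Pow X" by (auto dest: shift_top_subset)
    show "f \<in> space ?N \<rightarrow> X" using spN fD by auto
    fix U assume "U \<in> {U. openin (shift_top X) U}"
    then obtain U' where U': "openin PT U'" "U = U' \<inter> X"
      by (auto simp: shift_top_def openin_subtopology)
    have "openin PT {x \<in> topspace PT. f x \<in> U'}"
      by (rule openin_continuous_map_preimage[OF cont U'(1)])
    then have o: "openin PT (f -` U')" by (simp add: vimage_def)
    have "f -` U \<inter> space ?N = (f -` U' \<inter> X) \<inter> D" using spN U'(2) fD DX by auto
    moreover have "(f -` U' \<inter> X) \<inter> D \<in> sets (borel_X X)"
      using PT_open_in_borel_X[OF o] D by auto
    ultimately show "f -` U \<inter> space ?N \<in> sets ?N"
      using DX by (simp add: sets_restrict_space_iff[OF DD])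
  qed
  have meas: "f \<in> measurable ?N (borel_X X)" using meas0 by (simp add: borel_X_def)
  have "f -` A \<inter> space ?N \<in> sets ?N" using measurable_sets[OF meas A] .
  then show ?thesis using spN by (simp add: sets_restrict_space_iff[OF DD])
qed

definition repl :: "'d site set \<Rightarrow> ('d,'a) config \<Rightarrow> ('d,'a) config \<Rightarrow> ('d,'a) config" where
  "repl F v x = (\<lambda>n. if n \<in> F then v n else x n)"

definition moveD :: "('d,'a) config set \<Rightarrow> 'd site set \<Rightarrow> ('d,'a) config \<Rightarrow> ('d,'a) config \<Rightarrow> ('d,'a) config set" where
  "moveD X F u v = {x\<in>X. (\<forall>n\<in>F. x n = u n) \<and> repl F v x \<in> X}"

definition csum :: "('a \<Rightarrow> 'g::ab_group_add) \<Rightarrow> 'd site set \<Rightarrow> ('d,'a) config \<Rightarrow> ('d,'a) config \<Rightarrow> 'g" where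
  "csum G F u v = (\<Sum>j\<in>F. G (v j) - G (u j))"

definition Idx :: "('d site set \<times> ('d,'a) config \<times> ('d,'a) config) set" where
  "Idx = {(F,u,v). finite F \<and> u \<in> F \<rightarrow>\<^sub>E UNIV \<and> v \<in> F \<rightarrow>\<^sub>E UNIV}"

lemma repl_cont: "continuous_map PT PT (repl F v)"
  unfolding continuous_map_componentwise_UNIV repl_def
proof
  fix k
  show "continuous_map PT (discrete_topology UNIV) (\<lambda>x. if k \<in> F then v k else x k)"
  proof (cases "k \<in> F")
    case True
    then show ?thesis by simp
  next
    case False
    have "continuous_map PT ((\<lambda>_. discrete_topology UNIV) k) (\<lambda>x. x k)"
      by (rule continuous_map_product_projection) simp
    then show ?thesis using False by simp
  qed
qed

definition sbox :: "'d::finite site \<Rightarrow> int \<Rightarrow> 'd site set" where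
  "sbox j r = {k. \<forall>i. \<bar>k i - j i\<bar> \<le> r}"

lemma finite_box: "finite (sbox j r)"
proof -
  have "sbox j r = Pi\<^sub>E UNIV (\<lambda>i. {j i - r .. j i + r})"
  proof (intro set_eqI iffI)
    fix k assume "k \<in> sbox j r"
    then have "\<bar>k i - j i\<bar> \<le> r" for i unfolding sbox_def by blast
    then show "k \<in> Pi\<^sub>E UNIV (\<lambda>i. {j i - r .. j i + r})"
      unfolding PiE_UNIV_domain Pi_def by (simp add: abs_le_iff) (smt (verit))
  next
    fix k assume "k \<in> Pi\<^sub>E UNIV (\<lambda>i. {j i - r .. j i + r})"
    then have "k i \<in> {j i - r .. j i + r}" for i unfolding PiE_UNIV_domain Pi_def by blast
    then show "k \<in> sbox j r" unfolding sbox_def by (simp add: abs_le_iff) (smt (verit))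
  qed
  then show ?thesis by (simp add: finite_PiE)
qed

lemma repl_inv: "x \<in> moveD X F u v \<Longrightarrow> repl F u (repl F v x) = x"
  unfolding moveD_def repl_def by auto

lemma repl_in_moveD: "x \<in> moveD X F u v \<Longrightarrow> repl F v x \<in> moveD X F v u"
  unfolding moveD_def using repl_inv[of x X F u v] by (auto simp: repl_def moveD_def)

lemma moveD_bij: "bij_betw (repl F v) (moveD X F u v) (moveD X F v u)"
proof (rule bij_betw_byWitness[where f'="repl F u"])
  show "\<forall>a\<in>moveD X F u v. repl F u (repl F v a) = a" using repl_inv by blast
  show "\<forall>a'\<in>moveD X F v u. repl F v (repl F u a') = a'" using repl_inv by blast
  show "repl F v ` moveD X F u v \<subseteq> moveD X F v u" using repl_in_moveD by blast
  show "repl F u ` moveD X F v u \<subseteq> moveD X F u v" using repl_in_moveD by blast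
qed

lemma site_add_dist: "\<bar>site_add k j i - m i\<bar> \<le> \<bar>k i - m i\<bar> + \<bar>j i\<bar>"
  unfolding site_add_def by simp

lemma moveD_sets:
  fixes A :: "('a \<times> ('d::finite site \<Rightarrow> 'a)) set"
  assumes X: "X = TMS A" and F: "finite F"
  shows "moveD X F u v \<in> sets (borel_X X)"
proof -
  let ?W = "\<Union>m\<in>F. sbox m 2"
  have fW: "finite ?W" using F finite_box by blast
  have FW: "F \<subseteq> ?W" unfolding sbox_def by auto
  have "{x\<in>X. (\<forall>n\<in>F. x n = u n) \<and> repl F v x \<in> X} \<in> sets (borel_X X)"
  proof (rule local_sets[OF fW])
    fix x x' assume x: "x \<in> X" and x': "x' \<in> X" and agree: "\<forall>n\<in>?W. x n = x' n"
      and P: "(\<forall>n\<in>F. x n = u n) \<and> repl F v x \<in> X"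
    have "\<forall>n\<in>F. x' n = u n"
    proof
      fix n assume n: "n \<in> F"
      then have "n \<in> ?W" using FW by blast
      then have "x n = x' n" using agree by blast
      then show "x' n = u n" using P n by simp
    qed
    moreover have "repl F v x' \<in> X"
      unfolding X TMS_def
    proof (intro CollectI allI)
      fix k
      let ?y = "repl F v x'" and ?y' = "repl F v x"
      show "(?y k, restrict (\<lambda>j. ?y (site_add k j)) nbhd) \<in> A"
      proof (cases "\<exists>m\<in>F. k \<in> sbox m 1")
        case True
        then obtain m where m: "m \<in> F" "k \<in> sbox m 1" by auto
        have near: "site_add k j \<in> ?W" if "j \<in> nbhd" for j
        proof -
          have "\<forall>i. \<bar>site_add k j i - m i\<bar> \<le> 2"
          proof
            fix i
            have "\<bar>j i\<bar> \<le> 1" using that unfolding nbhd_def by auto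
            moreover have "\<bar>k i - m i\<bar> \<le> 1" using m(2) unfolding sbox_def by auto
            ultimately show "\<bar>site_add k j i - m i\<bar> \<le> 2" using site_add_dist[of k j i m] by linarith
          qed
          then show ?thesis using m(1) unfolding sbox_def by blast
        qed
        have "\<forall>i. \<bar>k i - m i\<bar> \<le> 2"
        proof
          fix i
          have "\<bar>k i - m i\<bar> \<le> 1" using m(2) unfolding sbox_def by blast
          then show "\<bar>k i - m i\<bar> \<le> 2" by simp
        qed
        then have "k \<in> sbox m 2" unfolding sbox_def by blast
        then have kW: "k \<in> ?W" using m(1) by blast
        have eqk: "?y k = ?y' k" using agree kW unfolding repl_def by auto
        have eqr: "restrict (\<lambda>j. ?y (site_add k j)) nbhd = restrict (\<lambda>j. ?y' (site_add k j)) nbhd"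
        proof (rule restrict_ext)
          fix j :: "'d site" assume j: "j \<in> nbhd"
          have "x (site_add k j) = x' (site_add k j)" using agree near[OF j] by blast
          then show "?y (site_add k j) = ?y' (site_add k j)" unfolding repl_def by simp
        qed
        have "?y' \<in> TMS A" using P X by simp
        then have "(?y' k, restrict (\<lambda>j. ?y' (site_add k j)) nbhd) \<in> A" unfolding TMS_def by blast
        then show ?thesis using eqk eqr by simp
      next
        case False
        have kF: "k \<notin> F" using False unfolding sbox_def by fastforce
        have nF: "site_add k j \<notin> F" if "j \<in> nbhd" for j
        proof
          assume "site_add k j \<in> F"
          moreover have "k \<in> sbox (site_add k j) 1"
            using that unfolding sbox_def nbhd_def site_add_def by auto
          ultimately show False using False by blast
        qed
        have eqk: "?y k = x' k" using kF unfolding repl_def by auto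
        have eqr: "restrict (\<lambda>j. ?y (site_add k j)) nbhd = restrict (\<lambda>j. x' (site_add k j)) nbhd"
          using nF unfolding repl_def by (intro restrict_ext) auto
        have "(x' k, restrict (\<lambda>j. x' (site_add k j)) nbhd) \<in> A" using x' X unfolding TMS_def by blast
        then show ?thesis using eqk eqr by simp
      qed
    qed
    ultimately show "(\<forall>n\<in>F. x' n = u n) \<and> repl F v x' \<in> X" by blast
  qed
  then show ?thesis unfolding moveD_def .
qed

lemma moveD_subset: "moveD X F u v \<subseteq> X"
  unfolding moveD_def by auto

lemma move_borel_bij:
  fixes A :: "('a \<times> ('d::finite site \<Rightarrow> 'a)) set"
  assumes X: "X = TMS A" and F: "finite F"
  shows "borel_bij (borel_X X) (moveD X F u v) (moveD X F v u) (repl F v)"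
  unfolding borel_bij_def
proof (intro conjI ballI impI)
  show D1: "moveD X F u v \<in> sets (borel_X X)" using moveD_sets[OF X F] .
  show D2: "moveD X F v u \<in> sets (borel_X X)" using moveD_sets[OF X F] .
  show "bij_betw (repl F v) (moveD X F u v) (moveD X F v u)" by (rule moveD_bij)
  fix B assume B: "B \<in> sets (borel_X X)"
  show "repl F v -` B \<inter> moveD X F u v \<in> sets (borel_X X)"
    by (rule cont_pre_sets[OF repl_cont D1 _ B]) (auto simp: moveD_def)
  assume BD: "B \<subseteq> moveD X F u v"
  have "repl F v ` B = repl F u -` B \<inter> moveD X F v u"
  proof
    show "repl F v ` B \<subseteq> repl F u -` B \<inter> moveD X F v u"
      using BD repl_inv repl_in_moveD by fastforce
    show "repl F u -` B \<inter> moveD X F v u \<subseteq> repl F v ` B"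
    proof
      fix y assume y: "y \<in> repl F u -` B \<inter> moveD X F v u"
      then have "repl F v (repl F u y) = y" using repl_inv by blast
      then show "y \<in> repl F v ` B" using y by (metis IntD1 image_eqI vimageE)
    qed
  qed
  moreover have "repl F u -` B \<inter> moveD X F v u \<in> sets (borel_X X)"
    by (rule cont_pre_sets[OF repl_cont D2 _ B]) (auto simp: moveD_def)
  ultimately show "repl F v ` B \<in> sets (borel_X X)" by simp
qed

lemma move_dset: "x \<in> moveD X F u v \<Longrightarrow> {n. x n \<noteq> repl F v x n} \<subseteq> F"
  unfolding repl_def by auto

lemma move_tail: "finite F \<Longrightarrow> x \<in> moveD X F u v \<Longrightarrow> (x, repl F v x) \<in> tail_rel X"
  unfolding tail_rel_def using move_dset[of x X F u v]
  by (auto simp: moveD_def intro: finite_subset)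

lemma move_Psi: "finite F \<Longrightarrow> x \<in> moveD X F u v \<Longrightarrow> Psi G x (repl F v x) = csum G F u v"
proof -
  assume F: "finite F" and x: "x \<in> moveD X F u v"
  have "Psi G x (repl F v x) = (\<Sum>j\<in>F. G (repl F v x j) - G (x j))"
    by (rule Psi_superset[OF F move_dset[OF x]])
  also have "\<dots> = csum G F u v" unfolding csum_def repl_def
    using x by (intro sum.cong) (auto simp: moveD_def)
  finally show ?thesis .
qed

lemma move_cover:
  assumes "(x,y) \<in> tail_rel X"
  shows "\<exists>(F,u,v)\<in>Idx. x \<in> moveD X F u v \<and> y = repl F v x"
proof -
  let ?F = "{n. x n \<noteq> y n}"
  have F: "finite ?F" using assms by (simp add: tail_rel_def)
  have xy: "x \<in> X" "y \<in> X" using assms by (auto simp: tail_rel_def)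
  have y: "repl ?F (restrict y ?F) x = y" unfolding repl_def by auto
  have "x \<in> moveD X ?F (restrict x ?F) (restrict y ?F)"
    unfolding moveD_def using y xy by auto
  moreover have "(?F, restrict x ?F, restrict y ?F) \<in> Idx" unfolding Idx_def using F by auto
  ultimately show ?thesis using y by fastforce
qed

lemma countable_Idx: "countable (Idx :: ('d::finite site set \<times> ('d,'a::finite) config \<times> ('d,'a) config) set)"
proof -
  have "Idx \<subseteq> (\<Union>F\<in>{F :: 'd site set. finite F}. {F} \<times> (F \<rightarrow>\<^sub>E (UNIV::'a set)) \<times> (F \<rightarrow>\<^sub>E (UNIV::'a set)))"
    unfolding Idx_def by auto
  moreover have "countable (\<Union>F\<in>{F :: 'd site set. finite F}. {F} \<times> (F \<rightarrow>\<^sub>E (UNIV::'a set)) \<times> (F \<rightarrow>\<^sub>E (UNIV::'a set)))"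
  proof (rule countable_UN[OF countable_Collect_finite])
    fix F :: "'d site set" assume "F \<in> {F. finite F}"
    then have "finite ({F} \<times> (F \<rightarrow>\<^sub>E (UNIV::'a set)) \<times> (F \<rightarrow>\<^sub>E (UNIV::'a set)))"
      by (simp add: finite_PiE)
    then show "countable ({F} \<times> (F \<rightarrow>\<^sub>E (UNIV::'a set)) \<times> (F \<rightarrow>\<^sub>E (UNIV::'a set)))"
      by (rule countable_finite)
  qed
  ultimately show ?thesis by (rule countable_subset)
qed

lemma eqcoord_sets:
  fixes X :: "('d,'a::finite) config set"
  assumes bb: "borel_bij M B C f" and sM: "sets M = sets (borel_X X)"
  shows "{x\<in>B. f x n = x n} \<in> sets M"
proof -
  have BX: "B \<subseteq> X" using bb_sets[OF bb] sM sets.sets_into_space[of B "borel_X X"] by auto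
  have "{x\<in>B. f x n = x n} = (\<Union>a. (f -` {y\<in>X. y n = a} \<inter> B) \<inter> {x\<in>X. x n = a})"
  proof
    have CX: "C \<subseteq> X" using bb_sets[OF bb] sM sets.sets_into_space[of C "borel_X X"] by auto
    have "f x \<in> X" if "x \<in> B" for x using that bb_bij[OF bb] CX by (auto simp: bij_betw_def)
    then show "{x\<in>B. f x n = x n} \<subseteq> (\<Union>a. (f -` {y\<in>X. y n = a} \<inter> B) \<inter> {x\<in>X. x n = a})"
      using BX by auto
  qed auto
  moreover have "(\<Union>a. (f -` {y\<in>X. y n = a} \<inter> B) \<inter> {x\<in>X. x n = a}) \<in> sets M"
  proof (rule sets.countable_UN)
    have "(f -` {y\<in>X. y n = a} \<inter> B) \<inter> {x\<in>X. x n = a} \<in> sets M" for a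
    proof (rule sets.Int)
      show "{x\<in>X. x n = a} \<in> sets M" using cyl_sets[of X n a] sM by simp
      show "f -` {y\<in>X. y n = a} \<inter> B \<in> sets M"
        by (rule bb_pre[OF bb]) (use cyl_sets[of X n a] sM in simp)
    qed
    then show "range (\<lambda>a. (f -` {y\<in>X. y n = a} \<inter> B) \<inter> {x\<in>X. x n = a}) \<subseteq> sets M" by blast
  qed
  ultimately show ?thesis by simp
qed

lemma Z_sets:
  fixes X :: "('d::finite,'a::finite) config set"
  assumes bb: "borel_bij M B C f" and sM: "sets M = sets (borel_X X)"
  shows "{x\<in>B. (\<forall>n. n \<notin> F \<longrightarrow> f x n = x n) \<and> (\<forall>n\<in>F. x n = u n \<and> f x n = v n)} \<in> sets M"
proof -
  let ?S = "\<lambda>n. if n \<in> F then {x\<in>X. x n = u n} \<inter> (f -` {y\<in>X. y n = v n} \<inter> B) else {x\<in>B. f x n = x n}"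
  have BX: "B \<subseteq> X" using bb_sets[OF bb] sM sets.sets_into_space[of B "borel_X X"] by auto
  have CX: "C \<subseteq> X" using bb_sets[OF bb] sM sets.sets_into_space[of C "borel_X X"] by auto
  have fX: "f x \<in> X" if "x \<in> B" for x using that bb_bij[OF bb] CX by (auto simp: bij_betw_def)
  have "{x\<in>B. (\<forall>n. n \<notin> F \<longrightarrow> f x n = x n) \<and> (\<forall>n\<in>F. x n = u n \<and> f x n = v n)} = B \<inter> (\<Inter>n. ?S n)"
  proof
    show "{x\<in>B. (\<forall>n. n \<notin> F \<longrightarrow> f x n = x n) \<and> (\<forall>n\<in>F. x n = u n \<and> f x n = v n)} \<subseteq> B \<inter> (\<Inter>n. ?S n)"
      using BX fX by auto
    show "B \<inter> (\<Inter>n. ?S n) \<subseteq> {x\<in>B. (\<forall>n. n \<notin> F \<longrightarrow> f x n = x n) \<and> (\<forall>n\<in>F. x n = u n \<and> f x n = v n)}"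
    proof
      fix x assume x: "x \<in> B \<inter> (\<Inter>n. ?S n)"
      then have S: "x \<in> ?S n" for n by blast
      have "f x n = x n" if "n \<notin> F" for n using S[of n] that by simp
      moreover have "x n = u n \<and> f x n = v n" if "n \<in> F" for n using S[of n] that by simp
      ultimately show "x \<in> {x\<in>B. (\<forall>n. n \<notin> F \<longrightarrow> f x n = x n) \<and> (\<forall>n\<in>F. x n = u n \<and> f x n = v n)}"
        using x by blast
    qed
  qed
  moreover have "(\<Inter>n. ?S n) \<in> sets M"
  proof (rule sets.countable_INT)
    have "?S n \<in> sets M" for n
    proof (cases "n \<in> F")
      case True
      have "{x\<in>X. x n = u n} \<in> sets M" using cyl_sets[of X n] sM by simp
      moreover have "f -` {y\<in>X. y n = v n} \<inter> B \<in> sets M"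
        by (rule bb_pre[OF bb]) (use cyl_sets[of X n] sM in simp)
      ultimately show ?thesis using True by simp
    next
      case False
      then show ?thesis using eqcoord_sets[OF bb sM, of n] by simp
    qed
    then show "range ?S \<subseteq> sets M" by blast
  qed simp
  ultimately show ?thesis using bb_sets[OF bb] by auto
qed

lemma bb_cong: "sets M = sets N \<Longrightarrow> borel_bij M B C f = borel_bij N B C f"
  unfolding borel_bij_def by simp

locale setting =
  fixes TA :: "('a::finite \<times> ('d::finite site \<Rightarrow> 'a)) set"
    and X :: "('d,'a) config set"
    and G :: "'a \<Rightarrow> 'g::{ab_group_add, countable}"
    and p :: "('d,'a) config measure"
  assumes X_def: "X = TMS TA"
    and prob: "prob_space p"
    and borel: "sets p = sets (borel_X X)"
    and nonsing: "nonsingular p (tail_rel X)"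
    and inv: "invariant p (tail_rel_Psi X G)"
    and erg: "ergodic p (tail_rel_Psi X G)"
begin

abbreviation "R \<equiv> tail_rel X"
abbreviation "R0 \<equiv> tail_rel_Psi X G"

sublocale P: prob_space p by (rule prob)

lemma space_p[simp]: "space p = X"
  using sets_eq_imp_space_eq[OF borel] by simp

definition iD :: "'d site set \<times> ('d,'a) config \<times> ('d,'a) config \<Rightarrow> ('d,'a) config set" where
  "iD i = (case i of (F,u,v) \<Rightarrow> moveD X F u v)"
definition iE :: "'d site set \<times> ('d,'a) config \<times> ('d,'a) config \<Rightarrow> ('d,'a) config set" where
  "iE i = (case i of (F,u,v) \<Rightarrow> moveD X F v u)"
definition iM :: "'d site set \<times> ('d,'a) config \<times> ('d,'a) config \<Rightarrow> ('d,'a) config \<Rightarrow> ('d,'a) config" where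
  "iM i = (case i of (F,u,v) \<Rightarrow> repl F v)"
definition ic :: "'d site set \<times> ('d,'a) config \<times> ('d,'a) config \<Rightarrow> 'g" where
  "ic i = (case i of (F,u,v) \<Rightarrow> csum G F u v)"

lemma move_bb: "i \<in> Idx \<Longrightarrow> borel_bij p (iD i) (iE i) (iM i)"
  using move_borel_bij[OF X_def] bb_cong[OF borel]
  unfolding iD_def iE_def iM_def Idx_def by (auto split: prod.splits)

lemma move_R: "i \<in> Idx \<Longrightarrow> x \<in> iD i \<Longrightarrow> (x, iM i x) \<in> R"
  using move_tail unfolding iD_def iM_def Idx_def by (auto split: prod.splits)

lemma move_Psi': "i \<in> Idx \<Longrightarrow> x \<in> iD i \<Longrightarrow> Psi G x (iM i x) = ic i"
  using move_Psi unfolding iD_def iM_def Idx_def ic_def by (auto split: prod.splits)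

lemma move_cover': "(x,y) \<in> R \<Longrightarrow> \<exists>i\<in>Idx. x \<in> iD i \<and> y = iM i x"
  using move_cover[of x y X] unfolding iD_def iM_def by (auto split: prod.splits)

lemma sets_subset_X: "A \<in> sets p \<Longrightarrow> A \<subseteq> X"
  using sets.sets_into_space[of A p] by simp

lemma inv_apply: "partial_iso p R0 B C f \<Longrightarrow> A \<in> sets p \<Longrightarrow> A \<subseteq> B \<Longrightarrow> emeasure p (f ` A) = emeasure p A"
  using inv unfolding invariant_def by blast

lemma R0_R: "(x,y) \<in> R0 \<Longrightarrow> (x,y) \<in> R"
  unfolding tail_rel_Psi_def by auto

lemma R_null: "A \<in> null_sets p \<Longrightarrow> R `` A \<in> null_sets p"
  using nonsing unfolding nonsingular_def by blast

lemma pi_img_null: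
  assumes "partial_iso p R B C f" "A \<in> sets p" "A \<subseteq> B" "emeasure p A = 0"
  shows "emeasure p (f ` A) = 0"
proof -
  have "R `` A \<in> null_sets p" using R_null assms(2,4) by blast
  moreover have "f ` A \<subseteq> R `` A" using assms(1,3) unfolding partial_iso_def by blast
  moreover have "f ` A \<in> sets p" using bb_img assms unfolding partial_iso_def by blast
  ultimately show ?thesis by (meson null_sets_subset null_setsD1)
qed

lemma pi_img_null_rev:
  assumes "partial_iso p R B C f" "A \<in> sets p" "A \<subseteq> B" "emeasure p (f ` A) = 0"
  shows "emeasure p A = 0"
proof -
  have fA: "f ` A \<in> sets p" using bb_img assms unfolding partial_iso_def by blast
  have "R `` (f ` A) \<in> null_sets p" using R_null assms(4) fA by blast
  moreover have "A \<subseteq> R `` (f ` A)" using assms(1,3) tail_rel_sym unfolding partial_iso_def by blast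
  ultimately show ?thesis using assms(2) by (meson null_sets_subset null_setsD1)
qed

lemma R0_trans:
  assumes "(x,y) \<in> R0" "(y,z) \<in> R0" shows "(x,z) \<in> R0"
proof -
  have r: "(x,y) \<in> R" "(y,z) \<in> R" and z: "Psi G x y = 0" "Psi G y z = 0" using assms unfolding R0_iff by auto
  have "(x,z) \<in> R" using tail_rel_trans[OF r] .
  moreover have "Psi G x z = 0" using Psi_trans_R[OF r, of G] z by simp
  ultimately show ?thesis unfolding R0_iff by simp
qed

lemma sat_lemma:
  assumes S: "S \<in> sets p" "emeasure p S > 0" and T: "T \<in> sets p" "emeasure p T > 0"
  shows "\<exists>Q P \<tau>. Q \<subseteq> S \<and> P \<subseteq> T \<and> Q \<in> sets p \<and> P \<in> sets p \<and> partial_iso p R0 Q P \<tau>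
     \<and> emeasure p P > 0 \<and> emeasure p Q = emeasure p P"
proof -
  define I0 where "I0 = {i\<in>Idx. ic i = 0}"
  have cI0: "countable I0" unfolding I0_def using countable_Idx by (rule countable_subset[rotated]) auto
  define sat where "sat = (\<Union>i\<in>I0. iM i ` (S \<inter> iD i))"
  have sat_sets: "sat \<in> sets p" unfolding sat_def
  proof (rule sets.countable_UN''[OF cI0])
    fix i assume "i \<in> I0"
    then have bb: "borel_bij p (iD i) (iE i) (iM i)" using move_bb unfolding I0_def by blast
    show "iM i ` (S \<inter> iD i) \<in> sets p"
      by (rule bb_img[OF bb]) (use S bb_sets[OF bb] in auto)
  qed
  have sat_eq: "sat = R0 `` S"
  proof
    show "sat \<subseteq> R0 `` S"
    proof
      fix y assume "y \<in> sat"
      then obtain i x where i: "i \<in> I0" and x: "x \<in> S" "x \<in> iD i" and y: "y = iM i x"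
        unfolding sat_def by blast
      have "(x, y) \<in> R0" unfolding R0_iff using i x y move_R move_Psi' unfolding I0_def by auto
      then show "y \<in> R0 `` S" using x by blast
    qed
    show "R0 `` S \<subseteq> sat"
    proof
      fix y assume "y \<in> R0 `` S"
      then obtain x where x: "x \<in> S" "(x,y) \<in> R0" by blast
      then obtain i where i: "i \<in> Idx" "x \<in> iD i" "y = iM i x" using move_cover' R0_R by blast
      have "ic i = 0" using move_Psi'[OF i(1,2)] x(2) i(3) unfolding R0_iff by simp
      then have "i \<in> I0" using i(1) unfolding I0_def by blast
      then show "y \<in> sat" unfolding sat_def using i x by blast
    qed
  qed
  have "emeasure p sat = 0 \<or> emeasure p sat = 1"
    using erg sat_sets unfolding ergodic_def
  proof (elim ballE impE)
    show "\<forall>x y. x \<in> sat \<longrightarrow> (x, y) \<in> R0 \<longrightarrow> y \<in> sat"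
      unfolding sat_eq using R0_trans by blast
  qed auto
  moreover have "S \<subseteq> sat"
  proof
    fix x assume "x \<in> S"
    then have "x \<in> X" using sets_subset_X S by blast
    then have "(x,x) \<in> R0" unfolding R0_iff by (simp add: tail_rel_refl)
    then show "x \<in> sat" unfolding sat_eq using \<open>x \<in> S\<close> by blast
  qed
  then have "emeasure p S \<le> emeasure p sat" using sat_sets by (intro emeasure_mono)
  ultimately have sat1: "emeasure p sat = 1" using S(2) by auto
  have "emeasure p (X - sat) = 0"
    using emeasure_compl[of sat p] sat_sets P.emeasure_space_1 sat1 by simp
  moreover have "X - sat \<in> sets p" using sets.compl_sets[OF sat_sets] by simp
  ultimately have nul: "X - sat \<in> null_sets p" by (auto intro: null_setsI)
  have "emeasure p (T - (X - sat)) = emeasure p T" by (rule emeasure_Diff_null_set[OF nul T(1)])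
  moreover have "T - (X - sat) = (\<Union>i\<in>I0. T \<inter> iM i ` (S \<inter> iD i))"
    using sets_subset_X[OF T(1)] unfolding sat_def by auto
  ultimately have pos: "emeasure p (\<Union>i\<in>I0. T \<inter> iM i ` (S \<inter> iD i)) > 0" using T(2) by simp
  have "\<exists>i\<in>I0. T \<inter> iM i ` (S \<inter> iD i) \<notin> null_sets p"
  proof (rule ccontr)
    assume "\<not> ?thesis"
    then have "(\<Union>i\<in>I0. T \<inter> iM i ` (S \<inter> iD i)) \<in> null_sets p"
      by (intro null_sets_UN'[OF cI0]) auto
    then show False using pos by auto
  qed
  then obtain i where i: "i \<in> I0" and nn: "T \<inter> iM i ` (S \<inter> iD i) \<notin> null_sets p" by blast
  have iI: "i \<in> Idx" "ic i = 0" using i unfolding I0_def by auto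
  have bb: "borel_bij p (iD i) (iE i) (iM i)" using move_bb iI by blast
  define P where "P = T \<inter> iM i ` (S \<inter> iD i)"
  define Q where "Q = iM i -` P \<inter> iD i \<inter> S"
  have img_sets: "iM i ` (S \<inter> iD i) \<in> sets p"
    by (rule bb_img[OF bb]) (use S bb_sets[OF bb] in auto)
  have P_sets: "P \<in> sets p" unfolding P_def using T img_sets by auto
  have Q_sets: "Q \<in> sets p" unfolding Q_def using bb_pre[OF bb P_sets] S by auto
  have QP: "iM i ` Q = P" unfolding P_def Q_def by auto
  have Qsub: "Q \<subseteq> iD i" unfolding Q_def by auto
  have bbQ: "borel_bij p Q P (iM i)" using bb_restrict[OF bb Q_sets Qsub] QP by simp
  have piQ: "partial_iso p R0 Q P (iM i)"
    unfolding partial_iso_def using bbQ Qsub move_R[OF iI(1)] move_Psi'[OF iI(1)] iI(2)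
    unfolding R0_iff by auto
  have "emeasure p P = emeasure p Q"
    using inv_apply[OF piQ Q_sets order_refl] QP by simp
  moreover have "emeasure p P > 0" using nn P_sets unfolding P_def by (auto simp: zero_less_iff_neq_zero)
  ultimately show ?thesis
    using piQ Q_sets P_sets unfolding Q_def P_def by (intro exI[of _ Q] exI[of _ P] exI[of _ "iM i"]) (auto simp: Q_def P_def)
qed

end

lemma int_le:
  assumes "A \<in> sets M" "\<And>x. x \<in> A \<Longrightarrow> g x \<le> k"
  shows "(\<integral>\<^sup>+x. g x * indicator A x \<partial>M) \<le> k * emeasure M A"
proof -
  have "(\<integral>\<^sup>+x. g x * indicator A x \<partial>M) \<le> (\<integral>\<^sup>+x. k * indicator A x \<partial>M)"
    using assms(2) by (intro nn_integral_mono) (auto split: split_indicator)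
  then show ?thesis using nn_integral_cmult_indicator[OF assms(1)] by simp
qed

lemma int_ge:
  assumes "A \<in> sets M" "\<And>x. x \<in> A \<Longrightarrow> k \<le> g x"
  shows "k * emeasure M A \<le> (\<integral>\<^sup>+x. g x * indicator A x \<partial>M)"
proof -
  have "(\<integral>\<^sup>+x. k * indicator A x \<partial>M) \<le> (\<integral>\<^sup>+x. g x * indicator A x \<partial>M)"
    using assms(2) by (intro nn_integral_mono) (auto split: split_indicator)
  then show ?thesis using nn_integral_cmult_indicator[OF assms(1)] by simp
qed

lemma not_AE_in:
  assumes "A \<in> sets M" "emeasure M A > 0" "AE x in M. x \<in> A \<longrightarrow> Q x" "\<And>x. x \<in> A \<Longrightarrow> \<not> Q x"
  shows False
proof -
  have "AE x in M. x \<notin> A"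
  proof (rule eventually_mono[OF assms(3)])
    fix x assume "x \<in> A \<longrightarrow> Q x"
    then show "x \<notin> A" using assms(4)[of x] by blast
  qed
  moreover have "{x\<in>space M. \<not> x \<notin> A} = A" using sets.sets_into_space[OF assms(1)] by auto
  ultimately have "emeasure M A = 0" using AE_iff_measurable[OF assms(1), of "\<lambda>x. x \<notin> A"] by simp
  then show False using assms(2) by simp
qed

lemma int_gt:
  assumes g[measurable]: "g \<in> borel_measurable M" and A[measurable]: "A \<in> sets M"
    and pos: "emeasure M A > 0" and fin: "emeasure M A \<noteq> \<infinity>" and k: "k \<noteq> \<infinity>"
    and gt: "\<And>x. x \<in> A \<Longrightarrow> k < g x"
  shows "k * emeasure M A < (\<integral>\<^sup>+x. g x * indicator A x \<partial>M)"
proof -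
  have "(\<integral>\<^sup>+x. k * indicator A x \<partial>M) < (\<integral>\<^sup>+x. g x * indicator A x \<partial>M)"
  proof (rule nn_integral_less)
    show "(\<integral>\<^sup>+x. k * indicator A x \<partial>M) \<noteq> \<infinity>"
      using nn_integral_cmult_indicator[OF A, of k] fin k by (simp add: ennreal_mult_eq_top_iff)
    show "AE x in M. k * indicator A x \<le> g x * indicator A x"
      using gt by (intro AE_I2) (auto split: split_indicator intro: less_imp_le)
    show "\<not> (AE x in M. g x * indicator A x \<le> k * indicator A x)"
    proof
      assume "AE x in M. g x * indicator A x \<le> k * indicator A x"
      then have "AE x in M. x \<in> A \<longrightarrow> g x \<le> k" by eventually_elim (auto split: split_indicator)
      then show False using not_AE_in[OF A pos] gt by (meson not_le)
    qed
  qed auto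
  then show ?thesis using nn_integral_cmult_indicator[OF A] by simp
qed

lemma int_lt:
  assumes g[measurable]: "g \<in> borel_measurable M" and A[measurable]: "A \<in> sets M"
    and pos: "emeasure M A > 0" and fin: "emeasure M A \<noteq> \<infinity>" and k: "k \<noteq> \<infinity>"
    and lt: "\<And>x. x \<in> A \<Longrightarrow> g x < k"
  shows "(\<integral>\<^sup>+x. g x * indicator A x \<partial>M) < k * emeasure M A"
proof -
  have "(\<integral>\<^sup>+x. g x * indicator A x \<partial>M) < (\<integral>\<^sup>+x. k * indicator A x \<partial>M)"
  proof (rule nn_integral_less)
    have "(\<integral>\<^sup>+x. g x * indicator A x \<partial>M) \<le> k * emeasure M A"
      by (rule int_le[OF A]) (use lt in \<open>auto intro: less_imp_le\<close>)
    also have "\<dots> < \<infinity>" using fin k by (simp add: ennreal_mult_less_top less_top)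
    finally show "(\<integral>\<^sup>+x. g x * indicator A x \<partial>M) \<noteq> \<infinity>" by simp
    show "AE x in M. g x * indicator A x \<le> k * indicator A x"
      using lt by (intro AE_I2) (auto split: split_indicator intro: less_imp_le)
    show "\<not> (AE x in M. k * indicator A x \<le> g x * indicator A x)"
    proof
      assume "AE x in M. k * indicator A x \<le> g x * indicator A x"
      then have "AE x in M. x \<in> A \<longrightarrow> k \<le> g x" by eventually_elim (auto split: split_indicator)
      then show False using not_AE_in[OF A pos] lt by (meson not_le)
    qed
  qed auto
  then show ?thesis using nn_integral_cmult_indicator[OF A] by simp
qed

context setting
begin

lemma conj2:
  assumes pi1: "partial_iso p R B1 C1 f1" and c1: "\<forall>x\<in>B1. Psi G x (f1 x) = c"
    and pi2: "partial_iso p R B2 C2 f2" and c2: "\<forall>x\<in>B2. Psi G x (f2 x) = c"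
    and tau: "partial_iso p R0 Q P \<tau>" and QB: "Q \<subseteq> B2" and PB: "P \<subseteq> B1"
  shows "emeasure p (f1 ` P) = emeasure p (f2 ` Q)"
proof -
  have bbt: "borel_bij p Q P \<tau>" using tau unfolding partial_iso_def by blast
  have QP: "Q \<in> sets p" "P \<in> sets p" using bb_sets[OF bbt] by auto
  have bb2: "borel_bij p Q (f2 ` Q) f2"
    using bb_restrict[OF _ QP(1) QB] pi2 unfolding partial_iso_def by blast
  have bbi: "borel_bij p (f2 ` Q) Q (the_inv_into Q f2)" by (rule bb_inv[OF bb2])
  have bb1: "borel_bij p P (f1 ` P) f1"
    using bb_restrict[OF _ QP(2) PB] pi1 unfolding partial_iso_def by blast
  define \<phi> where "\<phi> = f1 \<circ> (\<tau> \<circ> the_inv_into Q f2)"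
  have bbphi: "borel_bij p (f2 ` Q) (f1 ` P) \<phi>"
    unfolding \<phi>_def by (rule bb_comp[OF bb_comp[OF bbi bbt] bb1])
  have inj2: "inj_on f2 Q" using bb_bij[OF bb2] by (auto simp: bij_betw_def)
  have tauQ: "\<tau> ` Q = P" using bb_bij[OF bbt] by (auto simp: bij_betw_def)
  have rel: "(y, \<phi> y) \<in> R0" if y: "y \<in> f2 ` Q" for y
  proof -
    obtain x where x: "x \<in> Q" "y = f2 x" using y by blast
    have phiy: "\<phi> y = f1 (\<tau> x)" unfolding \<phi>_def using x the_inv_into_f_f[OF inj2 x(1)] by simp
    have r1: "(x, f2 x) \<in> R" using pi2 x QB unfolding partial_iso_def by blast
    have r2: "(x, \<tau> x) \<in> R0" using tau x unfolding partial_iso_def by blast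
    have txP: "\<tau> x \<in> P" using tauQ x by blast
    have r3: "(\<tau> x, f1 (\<tau> x)) \<in> R" using pi1 txP PB unfolding partial_iso_def by blast
    have r2': "(x, \<tau> x) \<in> R" and z2: "Psi G x (\<tau> x) = 0" using r2 unfolding R0_iff by auto
    have r21: "(f2 x, x) \<in> R" using tail_rel_sym[OF r1] .
    have r23: "(x, f1 (\<tau> x)) \<in> R" using tail_rel_trans[OF r2' r3] .
    have "Psi G (f2 x) (f1 (\<tau> x)) = Psi G (f2 x) x + Psi G x (f1 (\<tau> x))"
      using Psi_trans_R[OF r21 r23] .
    also have "Psi G x (f1 (\<tau> x)) = Psi G x (\<tau> x) + Psi G (\<tau> x) (f1 (\<tau> x))"
      using Psi_trans_R[OF r2' r3] .
    also have "Psi G (f2 x) x = - Psi G x (f2 x)" using Psi_sym_R[OF r1] .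
    finally have e: "Psi G (f2 x) (f1 (\<tau> x)) = - Psi G x (f2 x) + (Psi G x (\<tau> x) + Psi G (\<tau> x) (f1 (\<tau> x)))" .
    have "Psi G x (f2 x) = c" using c2 x(1) QB by blast
    moreover have "Psi G (\<tau> x) (f1 (\<tau> x)) = c" using c1 txP PB by blast
    ultimately have "Psi G (f2 x) (f1 (\<tau> x)) = 0" using e z2 by simp
    moreover have "(f2 x, f1 (\<tau> x)) \<in> R" using tail_rel_trans[OF r21 r23] .
    ultimately show ?thesis unfolding R0_iff using phiy x(2) by simp
  qed
  have pi: "partial_iso p R0 (f2 ` Q) (f1 ` P) \<phi>" unfolding partial_iso_def using bbphi rel by blast
  have "\<phi> ` (f2 ` Q) = f1 ` P"
    using bb_bij[OF bbphi] by (auto simp: bij_betw_def)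
  moreover have "emeasure p (\<phi> ` (f2 ` Q)) = emeasure p (f2 ` Q)"
    using inv_apply[OF pi _ order_refl] bb_sets[OF bbphi] by blast
  ultimately show ?thesis by simp
qed

end

context setting
begin

lemma const_lemma:
  assumes pi: "partial_iso p R B C f" and c: "\<forall>x\<in>B. Psi G x (f x) = c" and pos: "emeasure p B > 0"
  shows "\<forall>A\<in>sets p. A \<subseteq> B \<longrightarrow> emeasure p (f ` A) = ennreal (measure p (f ` B) / measure p B) * emeasure p A"
proof -
  have bb: "borel_bij p B C f" using pi unfolding partial_iso_def by blast
  have B: "B \<in> sets p" using bb_sets[OF bb] by blast
  have injf: "inj_on f B" using bb_bij[OF bb] by (auto simp: bij_betw_def)
  define \<mu> where "\<mu> A = emeasure p (f ` (A \<inter> B))" for A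
  define \<nu> where "\<nu> = measure_of X (sets p) \<mu>"
  have sa: "sigma_algebra X (sets p)" using sets.sigma_algebra_axioms[of p] by simp
  have posi: "positive (sets p) \<mu>" unfolding positive_def \<mu>_def by simp
  have img: "f ` (A \<inter> B) \<in> sets p" if "A \<in> sets p" for A
    using bb_img[OF bb, of "A \<inter> B"] that B by auto
  have ca: "countably_additive (sets p) \<mu>"
    unfolding countably_additive_def
  proof (intro allI impI)
    fix A :: "nat \<Rightarrow> ('d,'a) config set"
    assume A: "range A \<subseteq> sets p" and dA: "disjoint_family A" and "\<Union>(range A) \<in> sets p"
    have "range (\<lambda>i. f ` (A i \<inter> B)) \<subseteq> sets p" using A img by auto
    moreover have "disjoint_family (\<lambda>i. f ` (A i \<inter> B))"
      using dA injf unfolding disjoint_family_on_def inj_on_def by blast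
    ultimately have "(\<Sum>i. emeasure p (f ` (A i \<inter> B))) = emeasure p (\<Union>i. f ` (A i \<inter> B))"
      by (rule suminf_emeasure)
    moreover have "(\<Union>i. f ` (A i \<inter> B)) = f ` (\<Union>(range A) \<inter> B)" by auto
    ultimately show "(\<Sum>i. \<mu> (A i)) = \<mu> (\<Union>(range A))" unfolding \<mu>_def by simp
  qed
  have em_nu: "emeasure \<nu> A = \<mu> A" if "A \<in> sets p" for A
    unfolding \<nu>_def by (rule emeasure_measure_of_sigma[OF sa posi ca that])
  have sets_nu: "sets \<nu> = sets p"
  proof -
    have "sets \<nu> = sigma_sets X (sets p)" unfolding \<nu>_def
      by (rule sets_measure_of) (use sets_subset_X in blast)
    also have "\<dots> = sets p" using sets.sigma_sets_eq[of p] by simp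
    finally show ?thesis .
  qed
  have ac: "absolutely_continuous p \<nu>"
    unfolding absolutely_continuous_def
  proof
    fix A assume A: "A \<in> null_sets p"
    have As: "A \<in> sets p" using A by auto
    have "emeasure p (A \<inter> B) = 0" using A by (metis B Int_lower1 null_setsD1 null_sets_subset sets.Int As)
    then have "emeasure p (f ` (A \<inter> B)) = 0" using pi_img_null[OF pi _ _] As B by blast
    then show "A \<in> null_sets \<nu>" using em_nu[OF As] sets_nu As unfolding \<mu>_def by (auto intro: null_setsI)
  qed
  define g where "g = RN_deriv p \<nu>"
  have g_meas[measurable]: "g \<in> borel_measurable p" unfolding g_def by simp
  have dens: "density p g = \<nu>" unfolding g_def by (rule P.density_RN_deriv[OF ac sets_nu])
  have key: "\<mu> A = (\<integral>\<^sup>+x. g x * indicator A x \<partial>p)" if "A \<in> sets p" for A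
    using em_nu[OF that] emeasure_density[OF g_meas that] dens by simp
  have muf: "\<mu> A = emeasure p (f ` A)" if "A \<subseteq> B" for A
    unfolding \<mu>_def using that by (simp add: Int_absorb2)
  define \<kappa> where "\<kappa> = measure p (f ` B) / measure p B"
  define k where "k = ennreal \<kappa>"
  have fB: "f ` B \<in> sets p" using img[OF B] by simp
  have mBpos: "measure p B > 0" using pos P.emeasure_eq_measure
    by (metis ennreal_0 ennreal_eq_0_iff linorder_not_le measure_nonneg not_gr_zero order_le_less)
  have kB: "k * emeasure p B = emeasure p (f ` B)"
  proof -
    have "k * emeasure p B = ennreal (\<kappa> * measure p B)"
      unfolding k_def using P.emeasure_eq_measure ennreal_mult'' by simp
    also have "\<kappa> * measure p B = measure p (f ` B)" unfolding \<kappa>_def using mBpos by simp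
    finally show ?thesis using P.emeasure_eq_measure by simp
  qed
  have kfin: "k \<noteq> \<infinity>" unfolding k_def by simp
  have finA: "emeasure p A \<noteq> \<infinity>" for A by simp
  have muB: "\<mu> B = k * emeasure p B" using muf[of B] kB by simp
  define S1 where "S1 = {x\<in>B. k < g x}"
  have S1s: "S1 \<in> sets p"
  proof -
    have "{x\<in>space p. k < g x} \<in> sets p" by measurable
    moreover have "S1 = B \<inter> {x\<in>space p. k < g x}" using sets_subset_X[OF B] unfolding S1_def by auto
    ultimately show ?thesis using B by auto
  qed
  have S1n: "emeasure p S1 = 0"
  proof (rule ccontr)
    assume "emeasure p S1 \<noteq> 0"
    then have S1p: "emeasure p S1 > 0" by (simp add: zero_less_iff_neq_zero)
    have BS: "B - S1 \<in> sets p" using B S1s by auto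
    show False
    proof (cases "emeasure p (B - S1) = 0")
      case False
      then have BSp: "emeasure p (B - S1) > 0" by (simp add: zero_less_iff_neq_zero)
      obtain Q P \<tau> where QP: "Q \<subseteq> S1" "P \<subseteq> B - S1" "Q \<in> sets p" "P \<in> sets p" "partial_iso p R0 Q P \<tau>"
        "emeasure p P > 0" "emeasure p Q = emeasure p P"
        using sat_lemma[OF S1s S1p BS BSp] by blast
      have QB: "Q \<subseteq> B" "P \<subseteq> B" using QP(1,2) unfolding S1_def by auto
      have eq: "emeasure p (f ` P) = emeasure p (f ` Q)" by (rule conj2[OF pi c pi c QP(5) QB])
      have "\<mu> P \<le> k * emeasure p P" unfolding key[OF QP(4)]
        by (rule int_le[OF QP(4)]) (use QP(2) in \<open>auto simp: S1_def not_less\<close>)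
      moreover have "k * emeasure p Q < \<mu> Q" unfolding key[OF QP(3)]
        by (rule int_gt[OF g_meas QP(3) _ finA kfin]) (use QP in \<open>auto simp: S1_def\<close>)
      ultimately show False using eq muf QB QP(7) by simp
    next
      case True
      then have nul: "B - S1 \<in> null_sets p" using BS by auto
      have "emeasure p (B - (B - S1)) = emeasure p B" by (rule emeasure_Diff_null_set[OF nul B])
      moreover have "B - (B - S1) = S1" unfolding S1_def by auto
      ultimately have eqS: "emeasure p S1 = emeasure p B" by simp
      have "\<mu> B = \<mu> S1" unfolding key[OF B] key[OF S1s]
      proof (rule nn_integral_cong_AE)
        show "AE x in p. g x * indicator B x = g x * indicator S1 x"
          using AE_not_in[OF nul] by eventually_elim (auto simp: S1_def split: split_indicator)
      qed
      moreover have "k * emeasure p S1 < \<mu> S1" unfolding key[OF S1s]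
        by (rule int_gt[OF g_meas S1s S1p finA kfin]) (auto simp: S1_def)
      ultimately show False using muB eqS by simp
    qed
  qed
  define S2 where "S2 = {x\<in>B. g x < k}"
  have S2s: "S2 \<in> sets p"
  proof -
    have "{x\<in>space p. g x < k} \<in> sets p" by measurable
    moreover have "S2 = B \<inter> {x\<in>space p. g x < k}" using sets_subset_X[OF B] unfolding S2_def by auto
    ultimately show ?thesis using B by auto
  qed
  have S2n: "emeasure p S2 = 0"
  proof (rule ccontr)
    assume "emeasure p S2 \<noteq> 0"
    then have S2p: "emeasure p S2 > 0" by (simp add: zero_less_iff_neq_zero)
    have BS: "B - S2 \<in> sets p" using B S2s by auto
    show False
    proof (cases "emeasure p (B - S2) = 0")
      case False
      then have BSp: "emeasure p (B - S2) > 0" by (simp add: zero_less_iff_neq_zero)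
      obtain Q P \<tau> where QP: "Q \<subseteq> S2" "P \<subseteq> B - S2" "Q \<in> sets p" "P \<in> sets p" "partial_iso p R0 Q P \<tau>"
        "emeasure p P > 0" "emeasure p Q = emeasure p P"
        using sat_lemma[OF S2s S2p BS BSp] by blast
      have QB: "Q \<subseteq> B" "P \<subseteq> B" using QP(1,2) unfolding S2_def by auto
      have eq: "emeasure p (f ` P) = emeasure p (f ` Q)" by (rule conj2[OF pi c pi c QP(5) QB])
      have "k * emeasure p P \<le> \<mu> P" unfolding key[OF QP(4)]
        by (rule int_ge[OF QP(4)]) (use QP(2) in \<open>auto simp: S2_def not_less\<close>)
      moreover have "\<mu> Q < k * emeasure p Q" unfolding key[OF QP(3)]
        by (rule int_lt[OF g_meas QP(3) _ finA kfin]) (use QP in \<open>auto simp: S2_def\<close>)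
      ultimately show False using eq muf QB QP(7) by simp
    next
      case True
      then have nul: "B - S2 \<in> null_sets p" using BS by auto
      have "emeasure p (B - (B - S2)) = emeasure p B" by (rule emeasure_Diff_null_set[OF nul B])
      moreover have "B - (B - S2) = S2" unfolding S2_def by auto
      ultimately have eqS: "emeasure p S2 = emeasure p B" by simp
      have "\<mu> B = \<mu> S2" unfolding key[OF B] key[OF S2s]
      proof (rule nn_integral_cong_AE)
        show "AE x in p. g x * indicator B x = g x * indicator S2 x"
          using AE_not_in[OF nul] by eventually_elim (auto simp: S2_def split: split_indicator)
      qed
      moreover have "\<mu> S2 < k * emeasure p S2" unfolding key[OF S2s]
        by (rule int_lt[OF g_meas S2s S2p finA kfin]) (auto simp: S2_def)
      ultimately show False using muB eqS by simp
    qed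
  qed
  have AEk: "AE x in p. x \<in> B \<longrightarrow> g x = k"
  proof -
    have n1: "S1 \<in> null_sets p" using S1n S1s by auto
    have n2: "S2 \<in> null_sets p" using S2n S2s by auto
    show ?thesis using AE_not_in[OF n1] AE_not_in[OF n2]
      by eventually_elim (auto simp: S1_def S2_def not_less order.antisym)
  qed
  show ?thesis
  proof (intro ballI impI)
    fix A assume A: "A \<in> sets p" and AB: "A \<subseteq> B"
    have "emeasure p (f ` A) = \<mu> A" using muf[OF AB] by simp
    also have "\<dots> = (\<integral>\<^sup>+x. k * indicator A x \<partial>p)" unfolding key[OF A]
    proof (rule nn_integral_cong_AE)
      show "AE x in p. g x * indicator A x = k * indicator A x"
      proof (rule eventually_mono[OF AEk])
        fix x assume "x \<in> B \<longrightarrow> g x = k"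
        then show "g x * indicator A x = k * indicator A x" using AB by (auto split: split_indicator)
      qed
    qed
    also have "\<dots> = k * emeasure p A" by (rule nn_integral_cmult_indicator[OF A])
    finally show "emeasure p (f ` A) = ennreal (measure p (f ` B) / measure p B) * emeasure p A"
      unfolding k_def \<kappa>_def .
  qed
qed

end

context setting
begin

definition good :: "'g \<Rightarrow> (('d,'a) config \<Rightarrow> ('d,'a) config) \<Rightarrow> ('d,'a) config set \<Rightarrow> ('d,'a) config set \<Rightarrow> bool" where
  "good c f B C \<longleftrightarrow> partial_iso p R B C f \<and> (\<forall>x\<in>B. Psi G x (f x) = c) \<and> emeasure p B > 0"

definition kap :: "(('d,'a) config \<Rightarrow> ('d,'a) config) \<Rightarrow> ('d,'a) config set \<Rightarrow> real" where
  "kap f B = measure p (f ` B) / measure p B"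

definition Gam :: "'g set" where
  "Gam = {c. \<exists>f B C. good c f B C}"

definition K :: "'g \<Rightarrow> real" where
  "K c = (SOME \<kappa>. \<exists>f B C. good c f B C \<and> \<kappa> = kap f B)"

lemma good_const: "good c f B C \<Longrightarrow> A \<in> sets p \<Longrightarrow> A \<subseteq> B \<Longrightarrow> emeasure p (f ` A) = ennreal (kap f B) * emeasure p A"
  using const_lemma unfolding good_def kap_def by blast

lemma good_bb: "good c f B C \<Longrightarrow> borel_bij p B C f"
  unfolding good_def partial_iso_def by blast

lemma good_img_pos: "good c f B C \<Longrightarrow> emeasure p (f ` B) > 0"
proof -
  assume g: "good c f B C"
  have B: "B \<in> sets p" using bb_sets[OF good_bb[OF g]] by blast
  show ?thesis
  proof (rule ccontr)
    assume "\<not> ?thesis"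
    then have "emeasure p (f ` B) = 0" by (simp add: zero_less_iff_neq_zero)
    then have "emeasure p B = 0" using pi_img_null_rev[of B C f B] g B unfolding good_def by blast
    then show False using g unfolding good_def by simp
  qed
qed

lemma meas_pos: "emeasure p A > 0 \<Longrightarrow> measure p A > 0"
  using P.emeasure_eq_measure[of A] by (simp add: zero_less_iff_neq_zero) (metis ennreal_0 measure_nonneg order_le_less)

lemma kap_pos: "good c f B C \<Longrightarrow> kap f B > 0"
  unfolding kap_def using meas_pos good_img_pos good_def by (meson divide_pos_pos)

lemma cancel:
  assumes "0 \<le> a" "0 \<le> b" "ennreal a * emeasure p A = ennreal b * emeasure p A" "emeasure p A > 0"
  shows "a = b"
proof -
  have m: "measure p A > 0" using meas_pos assms(4) .
  have "ennreal (a * measure p A) = ennreal (b * measure p A)"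
    using assms(3) P.emeasure_eq_measure[of A] by (simp add: ennreal_mult'')
  then have "a * measure p A = b * measure p A" using assms(1,2) m by (simp add: ennreal_inj)
  then show ?thesis using m by simp
qed

lemma same:
  assumes g1: "good c f1 B1 C1" and g2: "good c f2 B2 C2"
  shows "kap f1 B1 = kap f2 B2"
proof -
  have B1: "B1 \<in> sets p" using bb_sets[OF good_bb[OF g1]] by blast
  have B2: "B2 \<in> sets p" using bb_sets[OF good_bb[OF g2]] by blast
  obtain Q P \<tau> where QP: "Q \<subseteq> B2" "P \<subseteq> B1" "Q \<in> sets p" "P \<in> sets p" "partial_iso p R0 Q P \<tau>"
    "emeasure p P > 0" "emeasure p Q = emeasure p P"
    using sat_lemma[OF B2 _ B1] g1 g2 unfolding good_def by blast
  have "emeasure p (f1 ` P) = emeasure p (f2 ` Q)"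
    using conj2[OF _ _ _ _ QP(5) QP(1,2)] g1 g2 unfolding good_def by blast
  then have "ennreal (kap f1 B1) * emeasure p P = ennreal (kap f2 B2) * emeasure p P"
    using good_const[OF g1 QP(4,2)] good_const[OF g2 QP(3,1)] QP(7) by simp
  then show ?thesis using cancel kap_pos[OF g1] kap_pos[OF g2] QP(6) by (meson less_imp_le)
qed

lemma K_eq: "good c f B C \<Longrightarrow> K c = kap f B"
proof -
  assume g: "good c f B C"
  have "\<exists>f B C. good c f B C \<and> K c = kap f B"
    unfolding K_def by (rule someI_ex) (use g in blast)
  then show ?thesis using same g by metis
qed

lemma good_id: "good 0 (\<lambda>x. x) X X"
proof -
  have "X \<in> sets p" using sets.top[of p] by simp
  then show ?thesis unfolding good_def partial_iso_def
    using bb_id[of X p] tail_rel_refl P.emeasure_space_1 by auto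
qed

lemma Gam_0: "0 \<in> Gam" and K_0: "K 0 = 1"
proof -
  show "0 \<in> Gam" unfolding Gam_def using good_id by blast
  have "K 0 = kap (\<lambda>x. x) X" using K_eq[OF good_id] .
  also have "\<dots> = 1" unfolding kap_def using P.prob_space by simp
  finally show "K 0 = 1" .
qed

lemma good_inv:
  assumes g: "good c f B C"
  shows "good (-c) (the_inv_into B f) C B"
proof -
  have bb: "borel_bij p B C f" using good_bb[OF g] .
  have bij: "bij_betw f B C" using bb_bij[OF bb] .
  have CfB: "C = f ` B" using bij by (auto simp: bij_betw_def)
  have "(y, the_inv_into B f y) \<in> R \<and> Psi G y (the_inv_into B f y) = - c" if y: "y \<in> C" for y
  proof -
    obtain x where x: "x \<in> B" "y = f x" using y CfB by blast
    have inv: "the_inv_into B f y = x" using x the_inv_into_f_f bij by (metis bij_betw_def)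
    have r: "(x, f x) \<in> R" using g x unfolding good_def partial_iso_def by blast
    have "Psi G (f x) x = - Psi G x (f x)" using Psi_sym_R[OF r] .
    then show ?thesis using tail_rel_sym[OF r] inv x g unfolding good_def by auto
  qed
  moreover have "emeasure p C > 0" using good_img_pos[OF g] CfB by simp
  ultimately show ?thesis unfolding good_def partial_iso_def using bb_inv[OF bb] by blast
qed

lemma Gam_uminus: "c \<in> Gam \<Longrightarrow> - c \<in> Gam"
  unfolding Gam_def using good_inv by blast

lemma good_mult:
  assumes g1: "good c1 f1 B1 C1" and g2: "good c2 f2 B2 C2"
  shows "\<exists>f B C. good (c1 + c2) f B C \<and> kap f B = kap f1 B1 * kap f2 B2"
proof -
  have bb1: "borel_bij p B1 C1 f1" using good_bb[OF g1] .
  have bb2: "borel_bij p B2 C2 f2" using good_bb[OF g2] .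
  have B1: "B1 \<in> sets p" and C1: "C1 \<in> sets p" using bb_sets[OF bb1] by auto
  have B2: "B2 \<in> sets p" using bb_sets[OF bb2] by auto
  have bij1: "bij_betw f1 B1 C1" using bb_bij[OF bb1] .
  have CfB: "C1 = f1 ` B1" using bij1 by (auto simp: bij_betw_def)
  have C1p: "emeasure p C1 > 0" using good_img_pos[OF g1] CfB by simp
  obtain Q P \<tau> where QP: "Q \<subseteq> C1" "P \<subseteq> B2" "Q \<in> sets p" "P \<in> sets p" "partial_iso p R0 Q P \<tau>"
    "emeasure p P > 0" "emeasure p Q = emeasure p P"
    using sat_lemma[OF C1 C1p B2] g2 unfolding good_def by blast
  have bbt: "borel_bij p Q P \<tau>" using QP(5) unfolding partial_iso_def by blast
  have bbinv: "borel_bij p C1 B1 (the_inv_into B1 f1)" using bb_inv[OF bb1] .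
  define A where "A = the_inv_into B1 f1 ` Q"
  have As: "A \<in> sets p" unfolding A_def by (rule bb_img[OF bbinv QP(3,1)])
  have AB: "A \<subseteq> B1" unfolding A_def using bb_bij[OF bbinv] QP(1) by (auto simp: bij_betw_def)
  have finv: "f1 (the_inv_into B1 f1 y) = y" if "y \<in> Q" for y
  proof -
    have "y \<in> f1 ` B1" using that QP(1) CfB by blast
    then show ?thesis using f_the_inv_into_f[of f1 B1 y] bij1 by (auto simp: bij_betw_def)
  qed
  have fA: "f1 ` A = Q"
  proof -
    have "f1 ` A = (\<lambda>y. f1 (the_inv_into B1 f1 y)) ` Q" unfolding A_def by (simp add: image_comp o_def)
    also have "\<dots> = (\<lambda>y. y) ` Q" using finv by (intro image_cong) auto
    finally show ?thesis by simp
  qed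
  have bbA: "borel_bij p A Q f1" using bb_restrict[OF bb1 As AB] fA by simp
  have bbP: "borel_bij p P (f2 ` P) f2" using bb_restrict[OF bb2 QP(4,2)] .
  define \<psi> where "\<psi> = f2 \<circ> (\<tau> \<circ> f1)"
  have bbpsi: "borel_bij p A (f2 ` P) \<psi>" unfolding \<psi>_def by (rule bb_comp[OF bb_comp[OF bbA bbt] bbP])
  have tauQ: "\<tau> ` Q = P" using bb_bij[OF bbt] by (auto simp: bij_betw_def)
  have rel: "(x, \<psi> x) \<in> R \<and> Psi G x (\<psi> x) = c1 + c2" if x: "x \<in> A" for x
  proof -
    have xB: "x \<in> B1" using x AB by blast
    have fxQ: "f1 x \<in> Q" using fA x by blast
    have tP: "\<tau> (f1 x) \<in> P" using tauQ fxQ by blast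
    have r1: "(x, f1 x) \<in> R" using g1 xB unfolding good_def partial_iso_def by blast
    have r2: "(f1 x, \<tau> (f1 x)) \<in> R0" using QP(5) fxQ unfolding partial_iso_def by blast
    have r2': "(f1 x, \<tau> (f1 x)) \<in> R" and z: "Psi G (f1 x) (\<tau> (f1 x)) = 0" using r2 unfolding R0_iff by auto
    have r3: "(\<tau> (f1 x), f2 (\<tau> (f1 x))) \<in> R" using g2 tP QP(2) unfolding good_def partial_iso_def by blast
    have r23: "(f1 x, f2 (\<tau> (f1 x))) \<in> R" using tail_rel_trans[OF r2' r3] .
    have "Psi G x (f2 (\<tau> (f1 x))) = Psi G x (f1 x) + (Psi G (f1 x) (\<tau> (f1 x)) + Psi G (\<tau> (f1 x)) (f2 (\<tau> (f1 x))))"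
      using Psi_trans_R[OF r1 r23, of G] Psi_trans_R[OF r2' r3, of G] by simp
    moreover have "Psi G x (f1 x) = c1" using g1 xB unfolding good_def by blast
    moreover have "Psi G (\<tau> (f1 x)) (f2 (\<tau> (f1 x))) = c2" using g2 tP QP(2) unfolding good_def by blast
    ultimately show ?thesis using z tail_rel_trans[OF r1 r23] unfolding \<psi>_def by simp
  qed
  have Apos: "emeasure p A > 0"
  proof (rule ccontr)
    assume "\<not> ?thesis"
    then have "emeasure p A = 0" by (simp add: zero_less_iff_neq_zero)
    then have "emeasure p (f1 ` A) = 0" using pi_img_null[OF _ As AB] g1 unfolding good_def by blast
    then show False using fA QP(6,7) by simp
  qed
  have gpsi: "good (c1 + c2) \<psi> A (f2 ` P)" unfolding good_def partial_iso_def using bbpsi rel Apos by blast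
  have psiA: "\<psi> ` A = f2 ` P"
  proof -
    have "\<psi> ` A = f2 ` (\<tau> ` (f1 ` A))" unfolding \<psi>_def by (simp add: image_image)
    then show ?thesis using fA tauQ by simp
  qed
  have "ennreal (kap \<psi> A) * emeasure p A = emeasure p (\<psi> ` A)" using good_const[OF gpsi As order_refl] by simp
  also have "\<dots> = ennreal (kap f2 B2) * emeasure p P" using psiA good_const[OF g2 QP(4,2)] by simp
  also have "\<dots> = ennreal (kap f2 B2) * emeasure p (f1 ` A)" using QP(7) fA by simp
  also have "\<dots> = ennreal (kap f2 B2) * (ennreal (kap f1 B1) * emeasure p A)" using good_const[OF g1 As AB] by simp
  also have "\<dots> = ennreal (kap f1 B1 * kap f2 B2) * emeasure p A"
    using kap_pos[OF g1] kap_pos[OF g2] by (simp add: ennreal_mult mult.assoc mult.commute mult.left_commute)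
  finally have "kap \<psi> A = kap f1 B1 * kap f2 B2"
    using cancel kap_pos[OF gpsi] kap_pos[OF g1] kap_pos[OF g2] Apos by (meson less_imp_le mult_nonneg_nonneg)
  then show ?thesis using gpsi by blast
qed

lemma Gam_plus: "c1 \<in> Gam \<Longrightarrow> c2 \<in> Gam \<Longrightarrow> c1 + c2 \<in> Gam \<and> K (c1 + c2) = K c1 * K c2"
proof -
  assume "c1 \<in> Gam" "c2 \<in> Gam"
  then obtain f1 B1 C1 f2 B2 C2 where g1: "good c1 f1 B1 C1" and g2: "good c2 f2 B2 C2" unfolding Gam_def by blast
  obtain f B C where g: "good (c1 + c2) f B C" "kap f B = kap f1 B1 * kap f2 B2" using good_mult[OF g1 g2] by blast
  then show ?thesis unfolding Gam_def using K_eq[OF g(1)] K_eq[OF g1] K_eq[OF g2] by auto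
qed

lemma K_pos: "c \<in> Gam \<Longrightarrow> K c > 0"
  unfolding Gam_def using K_eq kap_pos by fastforce

end

primrec nmul :: "nat \<Rightarrow> 'a::ab_group_add \<Rightarrow> 'a" where
  "nmul 0 g = 0"
| "nmul (Suc n) g = g + nmul n g"

lemma nmul_add: "nmul (m + n) g = nmul m g + nmul n g"
  by (induction m) (simp_all add: add.assoc)

lemma nmul_mult: "nmul (m * n) g = nmul m (nmul n g)"
  by (induction m) (simp_all add: nmul_add)

lemma nmul_distrib: "nmul n (a + b) = nmul n a + nmul n b"
  by (induction n) (simp_all add: algebra_simps)

lemma nmul_diff: "nmul n (a - b) = nmul n a - nmul n b"
proof -
  have "nmul n (a - b) + nmul n b = nmul n a" using nmul_distrib[of n "a - b" b] by simp
  then show ?thesis by (simp add: eq_diff_eq)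
qed

definition zmul :: "int \<Rightarrow> 'a::ab_group_add \<Rightarrow> 'a" where
  "zmul j g = nmul (nat j) g - nmul (nat (- j)) g"

lemma zmul_repr: "zmul (int m - int n) g = nmul m g - nmul n g"
proof -
  let ?j = "int m - int n"
  have e: "nat ?j + n = nat (- ?j) + m" by linarith
  have "nmul (nat ?j) g + nmul n g = nmul (nat (- ?j)) g + nmul m g"
    using arg_cong[OF e, of "\<lambda>k. nmul k g"] by (simp add: nmul_add)
  then show ?thesis unfolding zmul_def by (simp add: algebra_simps)
qed

lemma int_repr: "(j::int) = int (nat j) - int (nat (- j))" by simp

lemma zmul_add: "zmul (i + j) g = zmul i g + zmul j g"
proof -
  obtain a b c d where i: "i = int a - int b" and j: "j = int c - int d"
    using int_repr by blast
  have e: "i + j = int (a + c) - int (b + d)" unfolding i j by simp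
  have "zmul (i + j) g = nmul (a + c) g - nmul (b + d) g" by (simp only: e zmul_repr)
  also have "\<dots> = (nmul a g - nmul b g) + (nmul c g - nmul d g)" by (simp add: nmul_add algebra_simps)
  also have "\<dots> = zmul i g + zmul j g" by (simp only: i j zmul_repr)
  finally show ?thesis .
qed

lemma zmul_mult: "zmul (i * j) g = zmul i (zmul j g)"
proof -
  obtain a b c d where i: "i = int a - int b" and j: "j = int c - int d"
    using int_repr by blast
  have e: "i * j = int (a * c + b * d) - int (a * d + b * c)" unfolding i j by (simp add: algebra_simps)
  have "zmul (i * j) g = nmul (a * c + b * d) g - nmul (a * d + b * c) g" by (simp only: e zmul_repr)
  also have "\<dots> = (nmul a (nmul c g) + nmul b (nmul d g)) - (nmul a (nmul d g) + nmul b (nmul c g))"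
    by (simp add: nmul_add nmul_mult)
  also have "\<dots> = nmul a (nmul c g - nmul d g) - nmul b (nmul c g - nmul d g)"
    by (simp add: nmul_diff algebra_simps)
  also have "\<dots> = zmul i (zmul j g)" by (simp only: i j zmul_repr)
  finally show ?thesis .
qed

lemma zmul_0[simp]: "zmul 0 g = 0" unfolding zmul_def by simp
lemma zmul_1[simp]: "zmul 1 g = g" unfolding zmul_def by simp
lemma zmul_uminus: "zmul (- j) g = - zmul j g" unfolding zmul_def by simp

definition sg :: "'a::ab_group_add set \<Rightarrow> bool" where
  "sg K \<longleftrightarrow> 0 \<in> K \<and> (\<forall>a\<in>K. \<forall>b\<in>K. a + b \<in> K) \<and> (\<forall>a\<in>K. - a \<in> K)"

definition ad :: "'a::ab_group_add set \<Rightarrow> ('a \<Rightarrow> real) \<Rightarrow> bool" where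
  "ad K h \<longleftrightarrow> (\<forall>a\<in>K. \<forall>b\<in>K. h (a + b) = h a + h b)"

lemma sg_nmul: "sg K \<Longrightarrow> a \<in> K \<Longrightarrow> nmul n a \<in> K"
  by (induction n) (auto simp: sg_def)

lemma sg_diff: "sg K \<Longrightarrow> a \<in> K \<Longrightarrow> b \<in> K \<Longrightarrow> a - b \<in> K"
  unfolding sg_def by (metis diff_conv_add_uminus)

lemma sg_zmul: "sg K \<Longrightarrow> a \<in> K \<Longrightarrow> zmul j a \<in> K"
  unfolding zmul_def by (intro sg_diff sg_nmul)

lemma ad_0: "sg K \<Longrightarrow> ad K h \<Longrightarrow> h 0 = 0"
  unfolding sg_def ad_def by (metis add.right_neutral add_right_imp_eq add_0)

lemma ad_diff: "sg K \<Longrightarrow> ad K h \<Longrightarrow> a \<in> K \<Longrightarrow> b \<in> K \<Longrightarrow> h (a - b) = h a - h b"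
proof -
  assume s: "sg K" and d: "ad K h" and a: "a \<in> K" and b: "b \<in> K"
  have "h (a - b + b) = h (a - b) + h b" using d sg_diff[OF s a b] b unfolding ad_def by blast
  then show ?thesis by simp
qed

lemma ad_nmul: "sg K \<Longrightarrow> ad K h \<Longrightarrow> a \<in> K \<Longrightarrow> h (nmul n a) = real n * h a"
proof (induction n)
  case 0 then show ?case using ad_0 by simp
next
  case (Suc n)
  have "h (nmul (Suc n) a) = h a + h (nmul n a)"
    using Suc.prems sg_nmul[OF Suc.prems(1,3)] unfolding ad_def by simp
  then show ?case using Suc by (simp add: algebra_simps)
qed

lemma ad_zmul: "sg K \<Longrightarrow> ad K h \<Longrightarrow> a \<in> K \<Longrightarrow> h (zmul j a) = real_of_int j * h a"
proof -
  assume s: "sg K" and d: "ad K h" and a: "a \<in> K"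
  have "h (zmul j a) = h (nmul (nat j) a) - h (nmul (nat (- j)) a)"
    unfolding zmul_def by (rule ad_diff[OF s d sg_nmul[OF s a] sg_nmul[OF s a]])
  also have "\<dots> = (real (nat j) - real (nat (- j))) * h a" using ad_nmul[OF s d a] by (simp add: algebra_simps)
  also have "real (nat j) - real (nat (- j)) = real_of_int j" by simp
  finally show ?thesis .
qed

lemma ext_step:
  assumes s: "sg K" and d: "ad K h"
  shows "\<exists>K' h'. sg K' \<and> ad K' h' \<and> K \<subseteq> K' \<and> g \<in> K' \<and> (\<forall>a\<in>K. h' a = h a)"
proof -
  define T where "T = {t. zmul t g \<in> K}"
  define sl where "sl = (if \<exists>n. n \<noteq> 0 \<and> n \<in> T then (let n = SOME n. n \<noteq> 0 \<and> n \<in> T in h (zmul n g) / real_of_int n) else 0)"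
  have C: "h (zmul t g) = real_of_int t * sl" if t: "t \<in> T" for t
  proof (cases "\<exists>n. n \<noteq> 0 \<and> n \<in> T")
    case False
    then have "t = 0" using t by blast
    then show ?thesis using ad_0[OF s d] by simp
  next
    case True
    define n where "n = (SOME n. n \<noteq> 0 \<and> n \<in> T)"
    have n: "n \<noteq> 0" "n \<in> T" unfolding n_def using someI_ex[OF True] by auto
    have sl: "sl = h (zmul n g) / real_of_int n" unfolding sl_def using True n_def by (simp add: Let_def)
    have tK: "zmul t g \<in> K" and nK: "zmul n g \<in> K" using t n unfolding T_def by auto
    have "real_of_int n * h (zmul t g) = h (zmul n (zmul t g))" using ad_zmul[OF s d tK] by simp
    also have "zmul n (zmul t g) = zmul t (zmul n g)" by (metis zmul_mult mult.commute)
    also have "h \<dots> = real_of_int t * h (zmul n g)" using ad_zmul[OF s d nK] by simp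
    finally have e1: "real_of_int n * h (zmul t g) = real_of_int t * h (zmul n g)" .
    have "h (zmul n g) = sl * real_of_int n" using sl n(1) by simp
    then have "real_of_int n * h (zmul t g) = real_of_int n * (real_of_int t * sl)" using e1 by simp
    then show ?thesis using n(1) by simp
  qed
  define K' where "K' = {a + zmul j g | a j. a \<in> K}"
  define h' where "h' x = (SOME r. \<exists>a j. a \<in> K \<and> x = a + zmul j g \<and> r = h a + real_of_int j * sl)" for x
  have wd: "h a + real_of_int j * sl = h a' + real_of_int j' * sl"
    if "a \<in> K" "a' \<in> K" "a + zmul j g = a' + zmul j' g" for a a' j j'
  proof -
    have "zmul (j - j') g = a' - a" using that(3) zmul_add[of j "- j'" g] zmul_uminus[of j' g]
      by (simp add: algebra_simps) (metis add.commute add_diff_cancel diff_add_eq)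
    then have "j - j' \<in> T" unfolding T_def using sg_diff[OF s that(2,1)] by simp
    then have "h (a' - a) = real_of_int (j - j') * sl" using C by (metis \<open>zmul (j - j') g = a' - a\<close>)
    then show ?thesis using ad_diff[OF s d that(2,1)] by (simp add: algebra_simps)
  qed
  have h'eq: "h' x = h a + real_of_int j * sl" if "a \<in> K" "x = a + zmul j g" for x a j
  proof -
    have "\<exists>r. \<exists>a j. a \<in> K \<and> x = a + zmul j g \<and> r = h a + real_of_int j * sl" using that by blast
    then have "\<exists>a j. a \<in> K \<and> x = a + zmul j g \<and> h' x = h a + real_of_int j * sl"
      unfolding h'_def by (rule someI_ex)
    then obtain a1 j1 where "a1 \<in> K" "x = a1 + zmul j1 g" "h' x = h a1 + real_of_int j1 * sl" by blast
    then show ?thesis using wd[of a1 a j1 j] that by simp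
  qed
  have sK': "sg K'" unfolding sg_def
  proof (intro conjI ballI)
    have "0 + zmul 0 g \<in> K'" unfolding K'_def using s unfolding sg_def by blast
    then show "0 \<in> K'" by simp
  next
    fix x y assume "x \<in> K'" "y \<in> K'"
    then obtain a j b i where "a \<in> K" "x = a + zmul j g" "b \<in> K" "y = b + zmul i g" unfolding K'_def by blast
    then have "x + y = (a + b) + zmul (j + i) g" "a + b \<in> K" using s unfolding sg_def by (auto simp: zmul_add algebra_simps)
    then show "x + y \<in> K'" unfolding K'_def by blast
  next
    fix x assume "x \<in> K'"
    then obtain a j where "a \<in> K" "x = a + zmul j g" unfolding K'_def by blast
    then have "- x = (- a) + zmul (- j) g" "- a \<in> K" using s unfolding sg_def by (auto simp: zmul_uminus)
    then show "- x \<in> K'" unfolding K'_def by blast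
  qed
  have dK': "ad K' h'" unfolding ad_def
  proof (intro ballI)
    fix x y assume "x \<in> K'" "y \<in> K'"
    then obtain a j b i where ab: "a \<in> K" "x = a + zmul j g" "b \<in> K" "y = b + zmul i g" unfolding K'_def by blast
    then have xy: "x + y = (a + b) + zmul (j + i) g" "a + b \<in> K" using s unfolding sg_def by (auto simp: zmul_add algebra_simps)
    have "h (a + b) = h a + h b" using d ab unfolding ad_def by blast
    then show "h' (x + y) = h' x + h' y"
      using h'eq[OF xy(2) xy(1)] h'eq[OF ab(1,2)] h'eq[OF ab(3,4)] by (simp add: algebra_simps)
  qed
  have "K \<subseteq> K'" unfolding K'_def by (force intro: exI[of _ 0])
  moreover have "g \<in> K'" unfolding K'_def using s unfolding sg_def by (force intro: exI[of _ 1])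
  moreover have "\<forall>a\<in>K. h' a = h a" using h'eq[of _ _ 0] by simp
  ultimately show ?thesis using sK' dK' by blast
qed

definition stepP :: "'a::ab_group_add set \<times> ('a \<Rightarrow> real) \<Rightarrow> 'a \<Rightarrow> 'a set \<times> ('a \<Rightarrow> real) \<Rightarrow> bool" where
  "stepP Kh g Kh' \<longleftrightarrow> sg (fst Kh') \<and> ad (fst Kh') (snd Kh') \<and> fst Kh \<subseteq> fst Kh' \<and> g \<in> fst Kh' \<and> (\<forall>a\<in>fst Kh. snd Kh' a = snd Kh a)"

definition step :: "'a::ab_group_add set \<times> ('a \<Rightarrow> real) \<Rightarrow> 'a \<Rightarrow> 'a set \<times> ('a \<Rightarrow> real)" where
  "step Kh g = (SOME Kh'. stepP Kh g Kh')"

lemma step_ok: "sg (fst Kh) \<Longrightarrow> ad (fst Kh) (snd Kh) \<Longrightarrow> stepP Kh g (step Kh g)"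
  unfolding step_def
proof (rule someI_ex)
  assume "sg (fst Kh)" "ad (fst Kh) (snd Kh)"
  then obtain K' h' where "sg K' \<and> ad K' h' \<and> fst Kh \<subseteq> K' \<and> g \<in> K' \<and> (\<forall>a\<in>fst Kh. h' a = snd Kh a)"
    using ext_step by blast
  then show "\<exists>Kh'. stepP Kh g Kh'" unfolding stepP_def by (intro exI[of _ "(K', h')"]) simp
qed

primrec seqK :: "'a::{ab_group_add,countable} set \<times> ('a \<Rightarrow> real) \<Rightarrow> nat \<Rightarrow> 'a set \<times> ('a \<Rightarrow> real)" where
  "seqK Kh 0 = Kh"
| "seqK Kh (Suc n) = step (seqK Kh n) (from_nat n)"

lemma hom_extend:
  fixes K :: "'g::{ab_group_add,countable} set" and h :: "'g \<Rightarrow> real"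
  assumes s: "sg K" and d: "ad K h"
  shows "\<exists>H. (\<forall>a b. H (a + b) = H a + H b) \<and> (\<forall>a\<in>K. H a = h a)"
proof -
  let ?S = "seqK (K, h)"
  have inv: "sg (fst (?S n)) \<and> ad (fst (?S n)) (snd (?S n))" for n
  proof (induction n)
    case 0 then show ?case using s d by simp
  next
    case (Suc n) then show ?case using step_ok[of "?S n" "from_nat n"] unfolding stepP_def by simp
  qed
  have st: "stepP (?S n) (from_nat n) (?S (Suc n))" for n
  proof -
    have "stepP (?S n) (from_nat n) (step (?S n) (from_nat n))" using step_ok inv[of n] by blast
    then show ?thesis by simp
  qed
  have mono: "fst (?S m) \<subseteq> fst (?S n) \<and> (\<forall>a\<in>fst (?S m). snd (?S n) a = snd (?S m) a)" if "m \<le> n" for m n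
    using that
  proof (induction n)
    case 0 then show ?case by simp
  next
    case (Suc n)
    show ?case
    proof (cases "m = Suc n")
      case True then show ?thesis by simp
    next
      case False
      then have "m \<le> n" using Suc.prems by simp
      then show ?thesis using Suc.IH st[of n] unfolding stepP_def by auto
    qed
  qed
  have mem: "x \<in> fst (?S (Suc (to_nat x)))" for x using st[of "to_nat x"] unfolding stepP_def by simp
  define H where "H x = snd (?S (Suc (to_nat x))) x" for x
  have Hn: "H x = snd (?S n) x" if "Suc (to_nat x) \<le> n" for x n
    using mono[OF that] mem[of x] unfolding H_def by simp
  have "H (a + b) = H a + H b" for a b
  proof -
    define N where "N = Suc (max (to_nat (a + b)) (max (to_nat a) (to_nat b)))"
    have le: "Suc (to_nat a) \<le> N" "Suc (to_nat b) \<le> N" "Suc (to_nat (a + b)) \<le> N" unfolding N_def by auto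
    have "a \<in> fst (?S N)" using mono[OF le(1)] mem[of a] by blast
    moreover have "b \<in> fst (?S N)" using mono[OF le(2)] mem[of b] by blast
    ultimately have "snd (?S N) (a + b) = snd (?S N) a + snd (?S N) b" using inv[of N] unfolding ad_def by blast
    then show ?thesis using Hn[OF le(3)] Hn[OF le(1)] Hn[OF le(2)] by simp
  qed
  moreover have "H a = h a" if "a \<in> K" for a
    using mono[of 0 "Suc (to_nat a)"] that unfolding H_def by simp
  ultimately show ?thesis by blast
qed

context setting
begin

lemma sg_Gam: "sg Gam"
  unfolding sg_def using Gam_0 Gam_plus Gam_uminus by blast

lemma ad_Gam: "ad Gam (\<lambda>c. ln (K c))"
  unfolding ad_def
proof (intro ballI)
  fix a b assume a: "a \<in> Gam" and b: "b \<in> Gam"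
  have "K (a + b) = K a * K b" using Gam_plus[OF a b] by blast
  then show "ln (K (a + b)) = ln (K a) + ln (K b)" using K_pos[OF a] K_pos[OF b] by (simp add: ln_mult)
qed

lemma Bc_sets:
  assumes pi: "partial_iso p R B C f"
  shows "{x\<in>B. Psi G x (f x) = c} \<in> sets p"
proof -
  have bb: "borel_bij p B C f" using pi unfolding partial_iso_def by blast
  define Z where "Z i = (case i of (F,u,v) \<Rightarrow> {x\<in>B. (\<forall>n. n \<notin> F \<longrightarrow> f x n = x n) \<and> (\<forall>n\<in>F. x n = u n \<and> f x n = v n)})" for i :: "'d site set \<times> ('d,'a) config \<times> ('d,'a) config"
  have Zs: "Z i \<in> sets p" for i
    unfolding Z_def using Z_sets[OF bb borel] by (auto split: prod.splits)
  have "{x\<in>B. Psi G x (f x) = c} = (\<Union>i\<in>{i\<in>Idx. ic i = c}. Z i)"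
  proof
    show "{x\<in>B. Psi G x (f x) = c} \<subseteq> (\<Union>i\<in>{i\<in>Idx. ic i = c}. Z i)"
    proof
      fix x assume x: "x \<in> {x\<in>B. Psi G x (f x) = c}"
      define F where "F = {n. x n \<noteq> f x n}"
      have r: "(x, f x) \<in> R" using pi x unfolding partial_iso_def by blast
      have fF: "finite F" unfolding F_def using tail_rel_finite[OF r] .
      let ?i = "(F, restrict x F, restrict (f x) F)"
      have "?i \<in> Idx" unfolding Idx_def using fF by auto
      moreover have "ic ?i = c"
        unfolding ic_def csum_def using x by (simp add: Psi_def F_def)
      moreover have "x \<in> Z ?i" unfolding Z_def F_def using x by auto
      ultimately show "x \<in> (\<Union>i\<in>{i\<in>Idx. ic i = c}. Z i)" by blast
    qed
    show "(\<Union>i\<in>{i\<in>Idx. ic i = c}. Z i) \<subseteq> {x\<in>B. Psi G x (f x) = c}"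
    proof
      fix x assume "x \<in> (\<Union>i\<in>{i\<in>Idx. ic i = c}. Z i)"
      then obtain F u v where i: "(F,u,v) \<in> Idx" "ic (F,u,v) = c" and xZ: "x \<in> Z (F,u,v)" by auto
      have fF: "finite F" using i unfolding Idx_def by auto
      have xB: "x \<in> B" and out: "\<forall>n. n \<notin> F \<longrightarrow> f x n = x n" and inF: "\<forall>n\<in>F. x n = u n \<and> f x n = v n"
        using xZ unfolding Z_def by auto
      have sub: "{n. x n \<noteq> f x n} \<subseteq> F" using out by auto
      have "Psi G x (f x) = (\<Sum>j\<in>F. G (f x j) - G (x j))" by (rule Psi_superset[OF fF sub])
      also have "\<dots> = csum G F u v" unfolding csum_def using inF by (intro sum.cong) auto
      also have "\<dots> = c" using i(2) unfolding ic_def by simp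
      finally show "x \<in> {x\<in>B. Psi G x (f x) = c}" using xB by blast
    qed
  qed
  moreover have "(\<Union>i\<in>{i\<in>Idx. ic i = c}. Z i) \<in> sets p"
    by (rule sets.countable_UN''[OF countable_subset[OF _ countable_Idx]]) (use Zs in auto)
  ultimately show ?thesis by simp
qed

lemma main:
  fixes H :: "'g \<Rightarrow> real"
  assumes Hc: "\<forall>c\<in>Gam. H c = ln (K c)"
  shows "conformal p R (\<lambda>x y. H (Psi G x y))"
  unfolding conformal_def
proof (intro allI impI ballI)
  fix B C f A assume pi: "partial_iso p R B C f" and A: "A \<in> sets p" and AB: "A \<subseteq> B"
  have bb: "borel_bij p B C f" using pi unfolding partial_iso_def by blast
  have injf: "inj_on f B" using bb_bij[OF bb] by (auto simp: bij_betw_def)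
  define Bc where "Bc c = A \<inter> {x\<in>B. Psi G x (f x) = c}" for c
  have Bcs: "Bc c \<in> sets p" for c unfolding Bc_def using A Bc_sets[OF pi] by auto
  have BcB: "Bc c \<subseteq> B" for c unfolding Bc_def by auto
  have fBcs: "f ` Bc c \<in> sets p" for c using bb_img[OF bb Bcs BcB] .
  have each: "emeasure p (f ` Bc c) = ennreal (exp (H c)) * emeasure p (Bc c)" for c
  proof (cases "emeasure p (Bc c) = 0")
    case True
    then show ?thesis using pi_img_null[OF pi Bcs BcB] by simp
  next
    case False
    have bbc: "borel_bij p (Bc c) (f ` Bc c) f" using bb_restrict[OF bb Bcs BcB] .
    have g: "good c f (Bc c) (f ` Bc c)"
      unfolding good_def partial_iso_def using bbc False pi BcB
      by (auto simp: Bc_def partial_iso_def zero_less_iff_neq_zero)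
    then have "c \<in> Gam" unfolding Gam_def by blast
    then have "exp (H c) = K c" using Hc K_pos by simp
    also have "K c = kap f (Bc c)" using K_eq[OF g] .
    finally show ?thesis using good_const[OF g Bcs order_refl] by simp
  qed
  have disj: "disjoint_family_on Bc UNIV" unfolding disjoint_family_on_def Bc_def by auto
  have disjf: "disjoint_family_on (\<lambda>c. f ` Bc c) UNIV"
    unfolding disjoint_family_on_def
  proof (intro ballI impI)
    fix c d :: 'g assume "c \<noteq> d"
    then have "Bc c \<inter> Bc d = {}" using disj unfolding disjoint_family_on_def by blast
    then show "f ` Bc c \<inter> f ` Bc d = {}" using injf BcB inj_on_image_Int[of f B "Bc c" "Bc d"] by simp
  qed
  have Aeq: "A = (\<Union>c. Bc c)" unfolding Bc_def using AB by auto
  have fAeq: "f ` A = (\<Union>c. f ` Bc c)" using Aeq by auto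
  have "emeasure p (f ` A) = (\<integral>\<^sup>+c. emeasure p (f ` Bc c) \<partial>count_space UNIV)"
    unfolding fAeq by (rule emeasure_UN_countable[OF fBcs]) (auto simp: disjf)
  also have "\<dots> = (\<integral>\<^sup>+c. (\<integral>\<^sup>+x. ennreal (exp (H c)) * indicator (Bc c) x \<partial>p) \<partial>count_space UNIV)"
    using each nn_integral_cmult_indicator[OF Bcs] by simp
  also have "\<dots> = (\<integral>\<^sup>+x. (\<integral>\<^sup>+c. ennreal (exp (H c)) * indicator (Bc c) x \<partial>count_space UNIV) \<partial>p)"
  proof (rule nn_integral_count_space_nn_integral[symmetric])
    show "countable (UNIV :: 'g set)" by simp
    fix c :: 'g
    show "(\<lambda>x. ennreal (exp (H c)) * indicator (Bc c) x) \<in> borel_measurable p"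
      using Bcs[of c] by measurable
  qed
  also have "\<dots> = (\<integral>\<^sup>+x. ennreal (exp (H (Psi G x (f x)))) * indicator A x \<partial>p)"
  proof (rule nn_integral_cong)
    fix x
    show "(\<integral>\<^sup>+c. ennreal (exp (H c)) * indicator (Bc c) x \<partial>count_space UNIV) =
          ennreal (exp (H (Psi G x (f x)))) * indicator A x"
    proof (cases "x \<in> A")
      case True
      let ?c0 = "Psi G x (f x)"
      have "(\<lambda>c. ennreal (exp (H c)) * indicator (Bc c) x) = (\<lambda>c. ennreal (exp (H ?c0)) * indicator {?c0} c)"
        using True AB unfolding Bc_def by (auto simp: fun_eq_iff split: split_indicator)
      then have "(\<integral>\<^sup>+c. ennreal (exp (H c)) * indicator (Bc c) x \<partial>count_space UNIV) = ennreal (exp (H ?c0)) * emeasure (count_space UNIV) {?c0}"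
        using nn_integral_cmult_indicator[of "{?c0}" "count_space UNIV" "ennreal (exp (H ?c0))"] by simp
      then show ?thesis using True by simp
    next
      case False
      then have "(\<lambda>c. ennreal (exp (H c)) * indicator (Bc c) x) = (\<lambda>c. 0)" unfolding Bc_def by auto
      then show ?thesis using False by simp
    qed
  qed
  finally show "emeasure p (f ` A) = (\<integral>\<^sup>+x. ennreal (exp (H (Psi G x (f x)))) * indicator A x \<partial>p)" .
qed

lemma exists_H: "\<exists>H :: 'g \<Rightarrow> real. (\<forall>a b. H (a + b) = H a + H b) \<and> conformal p R (\<lambda>x y. H (Psi G x y))"
proof -
  obtain H where H: "\<forall>a b. H (a + b) = H a + H b" "\<forall>c\<in>Gam. H c = ln (K c)"
    using hom_extend[OF sg_Gam ad_Gam] by blast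
  then show ?thesis using main by blast
qed

end

theorem theorem1:
  fixes A :: "('a::finite \<times> ('d::finite site \<Rightarrow> 'a)) set"
    and X :: "('d,'a) config set"
    and G :: "'a \<Rightarrow> 'g::{ab_group_add, countable}"
    and p :: "('d,'a) config measure"
  assumes X_def: "X = TMS A"
    and irr: "irreducible_TMS X"
    and trans: "top_transitive X (tail_rel X)"
    and prob: "prob_space p"
    and borel: "sets p = sets (borel_X X)"
    and glob: "global_measure X p"
    and nonsing: "nonsingular p (tail_rel X)"
    and inv: "invariant p (tail_rel_Psi X G)"
    and erg: "ergodic p (tail_rel_Psi X G)"
  shows "\<exists>H :: 'g \<Rightarrow> real. (\<forall>a b. H (a + b) = H a + H b) \<and>
           conformal p (tail_rel X) (\<lambda>x y. H (Psi G x y))"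
proof -
  interpret S: setting A X G p
    by (rule setting.intro[OF X_def prob borel nonsing inv erg])
  show ?thesis by (rule S.exists_H)
qed

end
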